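(* Let $N\ge1$, let $z_1^{(1)}>\dots>z_{N-1}^{(1)}>0$ be the zeros of the Laguerre polynomial $L_{N-1}^{(1)}$ (orthogonal w.r.t. $e^{-x}x$ on $]0,\infty[$), and let $r=(r_1,\dots,r_N)\in C_N^D$ with $r_i:=\sqrt{2z_i^{(1)}}$ for $i\le N-1$ and $r_N:=0$. For $k>0$ let $(X_{t,k})_{t\ge0}$ be the Bessel process of type $D_N$ with multiplicity $k$ started in $0$. Define $S=(s_{i,j})_{i,j=1,\dots,N}$ by $$s_{i,i}:=1+2\sum_{l\ne i}(r_i-r_l)^{-2}+2\sum_{l\ne i}(r_i+r_l)^{-2},\qquad s_{i,j}:=2(r_i+r_j)^{-2}-2(r_i-r_j)^{-2}\ (i\ne j).$$ Then $S$ is invertible and, with $\Sigma:=S^{-1}$, for every $t>0$, $$X_{t,k}-\sqrt{kt}\,r\ \longrightarrow\ N(0,t\Sigma)\qquad\text{in distribution as }k\to\infty.$$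
   Context: $C_N^D:=\{x\in\mathbb R^N: x_1\ge\dots\ge x_{N-1}\ge|x_N|\}$. For $k\ge0$, the Bessel process of type $D_N$ with multiplicity $k$ is the diffusion on $C_N^D$ with reflecting boundary and generator $Lf=\frac12\Delta f+k\sum_{i=1}^N\sum_{j\ne i}\big(\frac{1}{x_i-x_j}+\frac{1}{x_i+x_j}\big)\frac{\partial f}{\partial x_i}$; started in $0$, $X_{t,k}$ has density on $C_N^D$ proportional to $e^{-\|y\|^2/(2t)}\prod_{i<j}(y_i^2-y_j^2)^{2k}$. $N(0,t\Sigma)$ is the centered normal distribution with covariance $t\Sigma$. *)

theory Defs
  imports "HOL-Probability.Probability"
begin

text \<open>Vectors in R^N are represented as extensional functions nat => real on the
index set {..<N} (indices 0..N-1 correspond to 1..N of the paper).\<close>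

definition RN :: "nat \<Rightarrow> (nat \<Rightarrow> real) measure" where
  "RN N = PiM {..<N} (\<lambda>_. lborel)"

definition chamberD :: "nat \<Rightarrow> (nat \<Rightarrow> real) set" where
  "chamberD N = {x \<in> PiE {..<N} (\<lambda>_. UNIV).
      (\<forall>i. Suc i < N - 1 \<longrightarrow> x (Suc i) \<le> x i) \<and>
      (2 \<le> N \<longrightarrow> \<bar>x (N - 1)\<bar> \<le> x (N - 2))}"

text \<open>Unnormalized density of X_{t,k} (Bessel process of type D_N, multiplicity k, started in 0).\<close>
definition besselD_dens :: "nat \<Rightarrow> real \<Rightarrow> real \<Rightarrow> (nat \<Rightarrow> real) \<Rightarrow> real" where
  "besselD_dens N k t y =
     indicator (chamberD N) y * exp (- (\<Sum>i<N. (y i)\<^sup>2) / (2 * t)) *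
     (\<Prod>i<N. \<Prod>j\<in>{i<..<N}. ((y i)\<^sup>2 - (y j)\<^sup>2) powr (2 * k))"

definition besselD_law :: "nat \<Rightarrow> real \<Rightarrow> real \<Rightarrow> (nat \<Rightarrow> real) measure" where
  "besselD_law N k t =
     density (RN N) (\<lambda>y. ennreal (besselD_dens N k t y / (\<integral>x. besselD_dens N k t x \<partial>RN N)))"

definition laguerre :: "nat \<Rightarrow> nat \<Rightarrow> real \<Rightarrow> real" where
  "laguerre n a x = (\<Sum>j\<le>n. (-1)^j * real ((n + a) choose (n - j)) * x ^ j / fact j)"

definition is_centered_normal :: "nat \<Rightarrow> (nat \<Rightarrow> nat \<Rightarrow> real) \<Rightarrow> (nat \<Rightarrow> real) measure \<Rightarrow> bool" where
  "is_centered_normal N C \<mu> \<longleftrightarrow>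
     prob_space \<mu> \<and> sets \<mu> = sets (RN N) \<and>
     (\<forall>u. (\<integral>x. cis (\<Sum>i<N. u i * x i) \<partial>\<mu>) =
          complex_of_real (exp (- (\<Sum>i<N. \<Sum>j<N. u i * C i j * u j) / 2)))"

definition conv_distr :: "nat \<Rightarrow> ('b \<Rightarrow> (nat \<Rightarrow> real) measure) \<Rightarrow> (nat \<Rightarrow> real) measure \<Rightarrow> 'b filter \<Rightarrow> bool" where
  "conv_distr N \<mu> \<nu> F \<longleftrightarrow>
     (\<forall>f :: (nat \<Rightarrow> real) \<Rightarrow> real.
        f \<in> borel_measurable (RN N) \<longrightarrow> continuous_on (PiE {..<N} (\<lambda>_. UNIV)) f \<longrightarrow>
        (\<exists>B. \<forall>x\<in>PiE {..<N} (\<lambda>_. UNIV). \<bar>f x\<bar> \<le> B) \<longrightarrow>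
        ((\<lambda>k. \<integral>x. f x \<partial>\<mu> k) \<longlongrightarrow> (\<integral>x. f x \<partial>\<nu>)) F)"

definition is_inverse_mat :: "nat \<Rightarrow> (nat \<Rightarrow> nat \<Rightarrow> real) \<Rightarrow> (nat \<Rightarrow> nat \<Rightarrow> real) \<Rightarrow> bool" where
  "is_inverse_mat N A B \<longleftrightarrow>
     (\<forall>i<N. \<forall>j<N. (\<Sum>l<N. A i l * B l j) = (if i = j then 1 else 0) \<and>
                   (\<Sum>l<N. B i l * A l j) = (if i = j then 1 else 0))"

end

theory Submission
  imports Defs "HOL-Computational_Algebra.Polynomial" "Jordan_Normal_Form.Determinant"
begin

lemma gauss1d:
  fixes c \<beta> :: real assumes c: "c > 0"
  shows "(\<integral>x. cis (\<beta> * x) * complex_of_real (exp (- c * x\<^sup>2 / 2)) \<partial>lborel)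
         = complex_of_real (sqrt (2 * pi / c) * exp (- \<beta>\<^sup>2 / (2 * c)))"
proof -
  define t where "t = \<beta> / sqrt c"
  have sc: "sqrt c > 0" using c by simp
  have "char std_normal_distribution t = complex_of_real (exp (- (t^2) / 2))"
    by (simp add: char_std_normal_distribution)
  also have "char std_normal_distribution t = (\<integral>y. complex_of_real (std_normal_density y) * iexp (t * y) \<partial>lborel)"
    unfolding char_def by (subst integral_density) (auto simp: normal_density_nonneg scaleR_conv_of_real)
  also have "\<dots> = complex_of_real \<bar>sqrt c\<bar> *  (\<integral>x. complex_of_real (std_normal_density (0 + sqrt c * x)) * iexp (t * (0 + sqrt c * x)) \<partial>lborel)"
    using sc by (subst lborel_integral_real_affine[where c="sqrt c" and t=0]) (auto simp: scaleR_conv_of_real)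
  also have "(\<lambda>x. complex_of_real (std_normal_density (0 + sqrt c * x)) * iexp (t * (0 + sqrt c * x)))
      = (\<lambda>x. complex_of_real (1 / sqrt (2 * pi)) * (cis (\<beta> * x) * complex_of_real (exp (- c * x\<^sup>2 / 2))))"
    using sc by (auto simp: std_normal_density_def t_def cis_conv_exp power_mult_distrib mult_ac)
  finally have "complex_of_real (exp (- t\<^sup>2 / 2)) = complex_of_real (sqrt c / sqrt (2*pi)) *
     (\<integral>x. cis (\<beta> * x) * complex_of_real (exp (- c * x\<^sup>2 / 2)) \<partial>lborel)"
    using sc by simp
  then have "(\<integral>x. cis (\<beta> * x) * complex_of_real (exp (- c * x\<^sup>2 / 2)) \<partial>lborel)
     = complex_of_real (sqrt (2*pi) / sqrt c) * complex_of_real (exp (- t\<^sup>2 / 2))"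
    using sc by (simp add: field_simps)
  also have "\<dots> = complex_of_real (sqrt (2 * pi / c) * exp (- \<beta>\<^sup>2 / (2 * c)))"
    using c by (simp add: t_def real_sqrt_divide power_divide)
  finally show ?thesis .
qed

definition qf :: "nat \<Rightarrow> (nat \<Rightarrow> nat \<Rightarrow> real) \<Rightarrow> (nat \<Rightarrow> real) \<Rightarrow> real" where
  "qf n A w = (\<Sum>i<n. \<Sum>j<n. w i * A i j * w j)"
definition mv :: "nat \<Rightarrow> (nat \<Rightarrow> nat \<Rightarrow> real) \<Rightarrow> (nat \<Rightarrow> real) \<Rightarrow> nat \<Rightarrow> real" where
  "mv n A v i = (\<Sum>j<n. A i j * v j)"
definition sch :: "nat \<Rightarrow> (nat \<Rightarrow> nat \<Rightarrow> real) \<Rightarrow> nat \<Rightarrow> nat \<Rightarrow> real" where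
  "sch n A i j = A i j - A i n * A n j / A n n"

lemma qf_Suc:
  assumes sym: "\<And>i j. i < Suc n \<Longrightarrow> j < Suc n \<Longrightarrow> A i j = A j i" and c: "A n n \<noteq> 0"
  shows "qf (Suc n) A w = qf n (sch n A) w + A n n * (w n + (\<Sum>j<n. A n j * w j) / A n n)\<^sup>2"
proof -
  have symn: "\<And>i. i < n \<Longrightarrow> A i n = A n i" using sym by auto
  define s where "s = (\<Sum>j<n. A n j * w j)"
  have 1: "qf (Suc n) A w = qf n A w + 2 * w n * s + A n n * (w n)\<^sup>2"
  proof -
    have "qf (Suc n) A w = qf n A w + (\<Sum>i<n. w i * A i n * w n) + (\<Sum>j<n. w n * A n j * w j) + w n * A n n * w n"
      unfolding qf_def by (simp add: sum.distrib)
    also have "(\<Sum>i<n. w i * A i n * w n) = w n * s"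
      unfolding s_def sum_distrib_left by (rule sum.cong) (auto simp: symn)
    also have "(\<Sum>j<n. w n * A n j * w j) = w n * s"
      unfolding s_def sum_distrib_left by (rule sum.cong) auto
    finally show ?thesis by (simp add: power2_eq_square)
  qed
  have 2: "qf n (sch n A) w = qf n A w - s\<^sup>2 / A n n"
  proof -
    have "qf n (sch n A) w = qf n A w - (\<Sum>i<n. \<Sum>j<n. w i * (A i n * A n j / A n n) * w j)"
      unfolding qf_def sch_def by (simp add: sum_subtractf[symmetric] algebra_simps)
    also have "(\<Sum>i<n. \<Sum>j<n. w i * (A i n * A n j / A n n) * w j) = (\<Sum>i<n. w i * A n i) * (\<Sum>j<n. A n j * w j) / A n n"
      by (simp add: sum_distrib_left sum_distrib_right sum_divide_distrib symn mult_ac)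
    also have "(\<Sum>i<n. w i * A n i) = s" unfolding s_def by (simp add: mult_ac)
    finally show ?thesis unfolding s_def by (simp add: power2_eq_square)
  qed
  show ?thesis using c unfolding 1 2 s_def[symmetric]
    by (simp add: power2_eq_square field_simps)
qed

lemma mv_Suc:
  assumes sym: "\<And>i j. i < Suc n \<Longrightarrow> j < Suc n \<Longrightarrow> A i j = A j i" and c: "A n n \<noteq> 0"
  shows "(\<Sum>i<Suc n. mv (Suc n) A v i * w i) = (\<Sum>i<n. mv n (sch n A) v i * w i)
           + mv (Suc n) A v n * (w n + (\<Sum>j<n. A n j * w j) / A n n)"
proof -
  have symn: "\<And>i. i < n \<Longrightarrow> A i n = A n i" using sym by auto
  define s where "s = (\<Sum>j<n. A n j * w j)"
  define b where "b = (\<Sum>j<n. A n j * v j)"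
  have 1: "(\<Sum>i<Suc n. mv (Suc n) A v i * w i) = (\<Sum>i<n. mv n A v i * w i) + v n * s + mv (Suc n) A v n * w n"
  proof -
    have "(\<Sum>i<Suc n. mv (Suc n) A v i * w i) = (\<Sum>i<n. mv n A v i * w i) + (\<Sum>i<n. A i n * v n * w i) + mv (Suc n) A v n * w n"
      unfolding mv_def by (simp add: sum.distrib algebra_simps)
    also have "(\<Sum>i<n. A i n * v n * w i) = v n * s"
      unfolding s_def sum_distrib_left by (rule sum.cong) (auto simp: symn)
    finally show ?thesis .
  qed
  have 2: "(\<Sum>i<n. mv n (sch n A) v i * w i) = (\<Sum>i<n. mv n A v i * w i) - s * b / A n n"
  proof -
    have "(\<Sum>i<n. mv n (sch n A) v i * w i) = (\<Sum>i<n. mv n A v i * w i) - (\<Sum>i<n. \<Sum>j<n. (A i n * A n j / A n n) * v j * w i)"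
    proof -
      have "(\<Sum>i<n. mv n (sch n A) v i * w i) = (\<Sum>i<n. mv n A v i * w i - (\<Sum>j<n. (A i n * A n j / A n n) * v j * w i))"
      proof (rule sum.cong[OF refl])
        fix i
        have "mv n (sch n A) v i = mv n A v i - (\<Sum>j<n. (A i n * A n j / A n n) * v j)"
          unfolding mv_def sch_def by (simp add: left_diff_distrib sum_subtractf)
        then show "mv n (sch n A) v i * w i = mv n A v i * w i - (\<Sum>j<n. (A i n * A n j / A n n) * v j * w i)"
          by (simp add: left_diff_distrib sum_distrib_right)
      qed
      then show ?thesis by (simp add: sum_subtractf)
    qed
    also have "(\<Sum>i<n. \<Sum>j<n. (A i n * A n j / A n n) * v j * w i) = (\<Sum>i<n. w i * A n i) * (\<Sum>j<n. A n j * v j) / A n n"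
      by (simp add: sum_distrib_left sum_distrib_right sum_divide_distrib symn mult_ac)
    also have "(\<Sum>i<n. w i * A n i) = s" unfolding s_def by (simp add: mult_ac)
    finally show ?thesis unfolding b_def .
  qed
  have 3: "mv (Suc n) A v n = b + A n n * v n" unfolding mv_def b_def by simp
  show ?thesis using c unfolding 1 2 3 s_def[symmetric]
    by (simp add: field_simps)
qed

lemma int1d: fixes a :: real assumes a: "a > 0"
  shows "integrable lborel (\<lambda>x. exp (- a * x\<^sup>2 / 2))"
proof -
  define \<sigma> where "\<sigma> = 1 / sqrt a"
  have s: "\<sigma> > 0" using a by (simp add: \<sigma>_def)
  have "integrable lborel (\<lambda>x. sqrt (2 * pi * \<sigma>\<^sup>2) * normal_density 0 \<sigma> x)"
    using integrable_normal_density[OF s, of 0] by (intro integrable_mult_right) simp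
  also have "(\<lambda>x. sqrt (2 * pi * \<sigma>\<^sup>2) * normal_density 0 \<sigma> x) = (\<lambda>x. exp (- a * x\<^sup>2 / 2))"
    using s a by (auto simp: normal_density_def \<sigma>_def power_divide field_simps)
  finally show ?thesis .
qed

lemma psf_lborel: "product_sigma_finite (\<lambda>_::nat. lborel :: real measure)"
  by (simp add: product_sigma_finite_def sigma_finite_lborel)

lemma int_prod_gauss: fixes a :: real and n :: nat assumes a: "a > 0"
  shows "integrable (PiM {..<n} (\<lambda>_. lborel)) (\<lambda>w. exp (- a * (\<Sum>i<n. (w i)\<^sup>2) / 2))"
proof -
  have "integrable (PiM {..<n} (\<lambda>_. lborel)) (\<lambda>w. \<Prod>i<n. exp (- a * (w i)\<^sup>2 / 2))"
    by (rule product_sigma_finite.product_integrable_prod[OF psf_lborel, where f="\<lambda>i x. exp (- a * x\<^sup>2 / 2)"]) (simp, rule int1d[OF a])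
  also have "(\<lambda>w. \<Prod>i<n. exp (- a * (w i)\<^sup>2 / 2)) = (\<lambda>w. exp (- a * (\<Sum>i<n. (w i)\<^sup>2) / 2))"
    by (auto simp: exp_sum[symmetric] sum_distrib_left sum_divide_distrib)
  finally show ?thesis .
qed

lemma cis_measurable[measurable]: "cis \<in> borel_measurable borel"
  by (rule borel_measurable_continuous_onI) (intro continuous_intros)

lemma ofreal_measurable[measurable]: "(complex_of_real) \<in> borel_measurable borel"
  by (rule borel_measurable_continuous_onI) (intro continuous_intros)

lemma qf_measurable[measurable]: "qf n A \<in> borel_measurable (PiM {..<n} (\<lambda>_. lborel))"
  unfolding qf_def by measurable

lemma int_gauss_qf:
  fixes n :: nat
  assumes l: "l > 0" and pd: "\<And>w. qf n A w \<ge> l * (\<Sum>i<n. (w i)\<^sup>2)"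
  shows "integrable (PiM {..<n} (\<lambda>_. lborel)) (\<lambda>w. exp (- qf n A w / 2))"
proof (rule Bochner_Integration.integrable_bound[OF int_prod_gauss[OF l]])
  show "AE w in PiM {..<n} (\<lambda>_. lborel). norm (exp (- qf n A w / 2)) \<le> norm (exp (- l * (\<Sum>i<n. (w i)\<^sup>2) / 2))"
    using pd by (auto intro!: AE_I2)
qed measurable

lemma int_gauss_qf_cis:
  fixes n :: nat
  assumes l: "l > 0" and pd: "\<And>w. qf n A w \<ge> l * (\<Sum>i<n. (w i)\<^sup>2)"
  shows "integrable (PiM {..<n} (\<lambda>_. lborel)) (\<lambda>w. cis (\<Sum>i<n. u i * w i) * complex_of_real (exp (- qf n A w / 2)))"
proof (rule Bochner_Integration.integrable_bound[OF int_gauss_qf[OF l pd]])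
  show "AE w in PiM {..<n} (\<lambda>_. lborel). norm (cis (\<Sum>i<n. u i * w i) * complex_of_real (exp (- qf n A w / 2))) \<le> norm (exp (- qf n A w / 2))"
    by (auto intro!: AE_I2 simp: norm_mult)
qed measurable

lemma qf_upd: "qf n A (w(n := y)) = qf n A w"
  unfolding qf_def by (intro sum.cong) auto

lemma sum_upd: fixes n :: nat shows "(\<Sum>j<n. f j * (w(n := y)) j) = (\<Sum>j<n. f j * w j)"
  by (intro sum.cong) auto

lemma qf_unit: "qf (Suc n) A (\<lambda>i. if i = n then 1 else 0) = A n n"
proof -
  have "qf (Suc n) A (\<lambda>i. if i = n then 1 else 0) = (\<Sum>i<Suc n. if i = n then A n n else 0)"
    unfolding qf_def by (intro sum.cong refl) (auto simp: if_distrib cong: if_cong)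
  then show ?thesis by simp
qed

lemma gauss_nd:
  fixes n :: nat
  shows "\<And>A l. (\<And>i j. i < n \<Longrightarrow> j < n \<Longrightarrow> A i j = A j i) \<Longrightarrow> l > 0 \<Longrightarrow>
     (\<And>w. qf n A w \<ge> l * (\<Sum>i<n. (w i)\<^sup>2)) \<Longrightarrow>
     \<exists>C>0. \<forall>v. (\<integral>w. cis (\<Sum>i<n. mv n A v i * w i) * complex_of_real (exp (- qf n A w / 2)) \<partial>PiM {..<n} (\<lambda>_. lborel))
        = complex_of_real (C * exp (- qf n A v / 2))"
proof (induction n)
  case 0
  show ?case by (intro exI[of _ 1]) (simp add: qf_def mv_def PiM_empty)
next
  case (Suc n)
  note sym = Suc.prems(1) and l = Suc.prems(2) and pd = Suc.prems(3)
  define c where "c = A n n"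
  have "l * (\<Sum>i<Suc n. ((\<lambda>i. if i = n then 1 else 0) i)\<^sup>2) \<le> c"
    using pd[of "\<lambda>i. if i = n then 1 else 0"] by (simp add: qf_unit c_def)
  moreover have "(\<Sum>i<Suc n. ((\<lambda>i. if i = n then 1 else (0::real)) i)\<^sup>2) = 1"
    by (simp add: if_distrib cong: if_cong)
  ultimately have cl: "c \<ge> l" by simp
  with l have c: "c > 0" by simp
  define A' where "A' = sch n A"
  have sym': "A' i j = A' j i" if "i < n" "j < n" for i j
    using sym that unfolding A'_def sch_def by (simp add: mult.commute)
  have pd': "qf n A' w \<ge> l * (\<Sum>i<n. (w i)\<^sup>2)" for w
  proof -
    define w2 where "w2 = w(n := - (\<Sum>j<n. A n j * w j) / c)"
    have "qf (Suc n) A w2 = qf n A' w2 + A n n * (w2 n + (\<Sum>j<n. A n j * w2 j) / A n n)\<^sup>2"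
      unfolding A'_def by (rule qf_Suc) (use sym c c_def in auto)
    also have "\<dots> = qf n A' w"
      unfolding w2_def qf_upd sum_upd using c by (simp add: c_def)
    finally have "qf n A' w = qf (Suc n) A w2" ..
    also have "\<dots> \<ge> l * (\<Sum>i<Suc n. (w2 i)\<^sup>2)" by (rule pd)
    moreover have "(\<Sum>i<Suc n. (w2 i)\<^sup>2) \<ge> (\<Sum>i<n. (w i)\<^sup>2)"
    proof -
      have "(\<Sum>i<n. (w i)\<^sup>2) = (\<Sum>i<n. (w2 i)\<^sup>2)" unfolding w2_def by (intro sum.cong) auto
      also have "\<dots> \<le> (\<Sum>i<Suc n. (w2 i)\<^sup>2)" by simp
      finally show ?thesis .
    qed
    ultimately show ?thesis using l by (smt (verit) mult_left_mono)
  qed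
  obtain C' where C': "C' > 0" and IH: "\<And>v. (\<integral>w. cis (\<Sum>i<n. mv n A' v i * w i) * complex_of_real (exp (- qf n A' w / 2)) \<partial>PiM {..<n} (\<lambda>_. lborel))
        = complex_of_real (C' * exp (- qf n A' v / 2))"
    using Suc.IH[of A' l, OF sym' l pd'] by blast
  show ?case
  proof (intro exI[of _ "sqrt (2 * pi / c) * C'"] conjI allI)
    show "sqrt (2 * pi / c) * C' > 0" using c C' by simp
    fix v
    define \<beta> where "\<beta> = mv (Suc n) A v n"
    define G where "G x = cis (\<Sum>i<n. mv n A' v i * x i) * complex_of_real (exp (- qf n A' x / 2))" for x
    define H where "H z = cis (\<beta> * z) * complex_of_real (exp (- c * z\<^sup>2 / 2))" for z
    define m where "m x = (\<Sum>j<n. A n j * x j) / c" for x :: "nat \<Rightarrow> real"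
    define F where "F w = cis (\<Sum>i<Suc n. mv (Suc n) A v i * w i) * complex_of_real (exp (- qf (Suc n) A w / 2))" for w
    have symS: "\<And>i j. i < Suc n \<Longrightarrow> j < Suc n \<Longrightarrow> A i j = A j i" using sym by auto
    have cne: "A n n \<noteq> 0" using c c_def by simp
    have Fx: "F (x(n := y)) = G x * H (m x + y)" for x y
    proof -
      have q: "qf (Suc n) A (x(n := y)) = qf n A' x + c * (m x + y)\<^sup>2"
        using qf_Suc[where n=n and A=A, OF symS cne, of "x(n := y)"] unfolding A'_def[symmetric] qf_upd sum_upd
        by (simp add: c_def m_def add.commute)
      have p: "(\<Sum>i<Suc n. mv (Suc n) A v i * (x(n := y)) i) = (\<Sum>i<n. mv n A' v i * x i) + \<beta> * (m x + y)"
        using mv_Suc[where n=n and A=A, OF symS cne, of v "x(n := y)"] unfolding A'_def[symmetric] sum_upd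
        by (simp add: c_def m_def \<beta>_def add.commute)
      have e: "exp (- (qf n A' x + c * (m x + y)\<^sup>2) / 2) = exp (- qf n A' x / 2) * exp (- c * (m x + y)\<^sup>2 / 2)"
        by (simp add: exp_add[symmetric] field_simps)
      show ?thesis unfolding F_def G_def H_def q p e
        by (simp add: cis_mult[symmetric] mult_ac)
    qed
    have intF: "integrable (PiM (insert n {..<n}) (\<lambda>_. lborel)) F"
      unfolding F_def lessThan_Suc[symmetric] using int_gauss_qf_cis[OF l pd] by simp
    have "(\<integral>w. F w \<partial>PiM {..<Suc n} (\<lambda>_. lborel)) = (\<integral>x. (\<integral>y. F (x(n := y)) \<partial>lborel) \<partial>PiM {..<n} (\<lambda>_. lborel))"
      unfolding lessThan_Suc
      by (rule product_sigma_finite.product_integral_insert[OF psf_lborel _ _ intF]) auto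
    also have "\<dots> = (\<integral>x. G x * complex_of_real (sqrt (2 * pi / c) * exp (- \<beta>\<^sup>2 / (2 * c))) \<partial>PiM {..<n} (\<lambda>_. lborel))"
    proof (rule Bochner_Integration.integral_cong[OF refl])
      fix x
      have "(\<integral>y. F (x(n := y)) \<partial>lborel) = (\<integral>y. G x * H (m x + y) \<partial>lborel)" unfolding Fx ..
      also have "\<dots> = G x * (\<integral>y. H (m x + y) \<partial>lborel)" by simp
      also have "(\<integral>y. H (m x + y) \<partial>lborel) = (\<integral>y. H y \<partial>lborel)"
        using lborel_integral_real_affine[of 1 H "m x"] by simp
      also have "\<dots> = complex_of_real (sqrt (2 * pi / c) * exp (- \<beta>\<^sup>2 / (2 * c)))"
        unfolding H_def by (rule gauss1d[OF c])
      finally show "(\<integral>y. F (x(n := y)) \<partial>lborel) = G x * complex_of_real (sqrt (2 * pi / c) * exp (- \<beta>\<^sup>2 / (2 * c)))" .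
    qed
    also have "\<dots> = (\<integral>x. G x \<partial>PiM {..<n} (\<lambda>_. lborel)) * complex_of_real (sqrt (2 * pi / c) * exp (- \<beta>\<^sup>2 / (2 * c)))"
      by simp
    also have "(\<integral>x. G x \<partial>PiM {..<n} (\<lambda>_. lborel)) = complex_of_real (C' * exp (- qf n A' v / 2))"
      unfolding G_def by (rule IH)
    also have "qf (Suc n) A v = qf n A' v + \<beta>\<^sup>2 / c"
    proof -
      have "qf (Suc n) A v = qf n A' v + c * (v n + (\<Sum>j<n. A n j * v j) / c)\<^sup>2"
        using qf_Suc[where n=n and A=A, OF symS cne, of v] unfolding A'_def c_def .
      moreover have "\<beta> = (\<Sum>j<n. A n j * v j) + c * v n" unfolding \<beta>_def mv_def c_def by simp
      moreover have "c * (v n + (\<Sum>j<n. A n j * v j) / c)\<^sup>2 = ((\<Sum>j<n. A n j * v j) + c * v n)\<^sup>2 / c"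
        using c by (simp add: field_simps power2_eq_square)
      ultimately show ?thesis by simp
    qed
    then have "exp (- qf (Suc n) A v / 2) = exp (- qf n A' v / 2) * exp (- \<beta>\<^sup>2 / (2 * c))"
      by (simp add: exp_add[symmetric] field_simps)
    ultimately show "(\<integral>w. cis (\<Sum>i<Suc n. mv (Suc n) A v i * w i) * complex_of_real (exp (- qf (Suc n) A w / 2)) \<partial>PiM {..<Suc n} (\<lambda>_. lborel))
        = complex_of_real (sqrt (2 * pi / c) * C' * exp (- qf (Suc n) A v / 2))"
      unfolding F_def by (simp add: mult_ac)
  qed
qed

definition lc :: "nat \<Rightarrow> nat \<Rightarrow> real" where
  "lc n j = (-1)^j * real ((n + 1) choose (n - j)) / fact j"

definition lp :: "nat \<Rightarrow> real poly" where
  "lp n = (\<Sum>j\<le>n. Polynomial.monom (lc n j) j)"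

lemma poly_lp: "poly (lp n) x = laguerre n 1 x"
  unfolding lp_def laguerre_def lc_def by (simp add: poly_sum poly_monom)

lemma pderiv_sum': "pderiv (sum f A) = (\<Sum>x\<in>A. pderiv (f x))"
  using higher_pderiv_sum[of 1 f A] by simp

lemma poly_d1: "poly (pderiv (lp n)) x = (\<Sum>j\<le>n. real j * lc n j * x ^ (j - 1))"
  unfolding lp_def pderiv_sum' by (simp add: pderiv_monom poly_sum poly_monom)

lemma poly_d2: "poly (pderiv (pderiv (lp n))) x = (\<Sum>j\<le>n. real (j - 1) * (real j * lc n j) * x ^ (j - 1 - 1))"
  unfolding lp_def pderiv_sum' by (simp add: pderiv_monom poly_sum poly_monom)

lemma lc_rec: assumes "k < n"
  shows "real (k + 1) * real (k + 2) * lc n (k + 1) = - (real (n - k) * lc n k)"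
proof -
  define a where "a = n - k - 1"
  have nk: "n - k = a + 1" "n - (k + 1) = a" using assms by (auto simp: a_def)
  have m: "k + 2 = (n + 1) - a" using assms by (simp add: a_def)
  have b1: "(a + 1) * ((n + 1) choose (a + 1)) = (n + 1) * (n choose a)"
    using Suc_times_binomial[of a n] by simp
  have b2: "((n + 1) - a) * ((n + 1) choose a) = (n + 1) * (n choose a)"
    using binomial_absorb_comp[of "n + 1" a] by simp
  have e: "real (k + 2) * real ((n + 1) choose a) = real (a + 1) * real ((n + 1) choose (a + 1))"
    using b1 b2 m by (metis of_nat_mult)
  have lc1: "lc n (k + 1) = - ((-1)^k * real ((n + 1) choose a)) / (real (k + 1) * fact k)"
    unfolding lc_def nk by (simp add: fact_Suc)
  have "real (k + 1) * real (k + 2) * lc n (k + 1) = - ((-1)^k * (real (k + 2) * real ((n + 1) choose a)) / fact k)"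
    unfolding lc1 by (simp add: field_simps del: of_nat_add of_nat_Suc)
  also have "\<dots> = - (real (n - k) * lc n k)"
    unfolding e lc_def nk by (simp add: field_simps)
  finally show ?thesis .
qed

lemma lag_ode: "x * poly (pderiv (pderiv (lp n))) x + (2 - x) * poly (pderiv (lp n)) x + real n * poly (lp n) x = 0"
proof -
  have p: "poly (lp n) x = (\<Sum>j\<le>n. lc n j * x ^ j)"
    unfolding lp_def by (simp add: poly_sum poly_monom)
  have A: "x * poly (pderiv (pderiv (lp n))) x + 2 * poly (pderiv (lp n)) x = (\<Sum>j\<le>n. real j * real (j + 1) * lc n j * x ^ (j - 1))"
    unfolding poly_d1 poly_d2 sum_distrib_left sum.distrib[symmetric]
  proof (rule sum.cong[OF refl])
    fix j
    show "x * (real (j - 1) * (real j * lc n j) * x ^ (j - 1 - 1)) + 2 * (real j * lc n j * x ^ (j - 1)) =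
          real j * real (j + 1) * lc n j * x ^ (j - 1)"
    proof (cases j)
      case 0 then show ?thesis by simp
    next
      case (Suc i) note j = this
      show ?thesis
      proof (cases i)
        case 0 then show ?thesis using j by simp
      next
        case (Suc i') then show ?thesis using j by (simp add: field_simps)
      qed
    qed
  qed
  have B: "- x * poly (pderiv (lp n)) x + real n * poly (lp n) x = (\<Sum>j\<le>n. real (n - j) * lc n j * x ^ j)"
    unfolding poly_d1 p sum_distrib_left sum.distrib[symmetric]
  proof (rule sum.cong[OF refl])
    fix j assume "j \<in> {..n}" then have jn: "j \<le> n" by simp
    show "- x * (real j * lc n j * x ^ (j - 1)) + real n * (lc n j * x ^ j) = real (n - j) * lc n j * x ^ j"
    proof (cases j)
      case 0 then show ?thesis by simp
    next
      case (Suc i) then show ?thesis using jn by (simp add: field_simps of_nat_diff)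
    qed
  qed
  show ?thesis
  proof (cases n)
    case 0 then show ?thesis unfolding poly_d1 poly_d2 by simp
  next
    case (Suc m)
    have "(\<Sum>j\<le>n. real j * real (j + 1) * lc n j * x ^ (j - 1)) = (\<Sum>k<n. real (k + 1) * real (k + 2) * lc n (k + 1) * x ^ k)"
      unfolding Suc sum.atMost_Suc_shift by (simp add: lessThan_Suc_atMost ac_simps)
    moreover have "(\<Sum>j\<le>n. real (n - j) * lc n j * x ^ j) = (\<Sum>k<n. real (n - k) * lc n k * x ^ k)"
      unfolding lessThan_Suc_atMost[symmetric] by simp
    ultimately have "x * poly (pderiv (pderiv (lp n))) x + (2 - x) * poly (pderiv (lp n)) x + real n * poly (lp n) x
       = (\<Sum>k<n. real (k + 1) * real (k + 2) * lc n (k + 1) * x ^ k) + (\<Sum>k<n. real (n - k) * lc n k * x ^ k)"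
      using A B by (simp only: algebra_simps)
    also have "\<dots> = (\<Sum>k<n. (real (k + 1) * real (k + 2) * lc n (k + 1) + real (n - k) * lc n k) * x ^ k)"
      by (simp only: sum.distrib[symmetric] distrib_right)
    also have "\<dots> = 0" by (intro sum.neutral ballI) (simp only: lc_rec lessThan_iff add.left_inverse mult_zero_left)
    finally show ?thesis .
  qed
qed

lemma lag_root_identity:
  fixes z :: "nat \<Rightarrow> real"
  assumes inj: "inj_on z {..<n}" and roots: "\<forall>i<n. laguerre n 1 (z i) = 0"
    and i: "i < n" and zi: "z i \<noteq> 0"
  shows "(\<Sum>l\<in>{..<n}-{i}. 1 / (z i - z l)) = (z i - 2) / (2 * z i)"
proof -
  define P where "P = (\<Prod>l<n. [:- z l, 1:])"
  define c where "c = lc n n"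
  have c0: "c \<noteq> 0" unfolding c_def lc_def by simp
  have degP: "degree P = n" unfolding P_def by (subst degree_prod_eq_sum_degree) auto
  have lcP: "lead_coeff P = 1" unfolding P_def lead_coeff_prod by simp
  have fac: "lp n = Polynomial.smult c P"
  proof (rule poly_eqI_degree_lead_coeff[where n = n and A = "z ` {..<n}"])
    have "poly.coeff (lp n) n = (\<Sum>j\<le>n. if n = j then lc n j else 0)"
      unfolding lp_def coeff_sum coeff_monom by simp
    also have "\<dots> = c" unfolding c_def by simp
    finally show "poly.coeff (lp n) n = poly.coeff (Polynomial.smult c P) n" using lcP degP by simp
    show "n \<le> card (z ` {..<n})" using card_image[OF inj] by simp
    show "degree (lp n) \<le> n" unfolding lp_def
      by (intro degree_sum_le) (auto intro: order.trans[OF degree_monom_le])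
    show "degree (Polynomial.smult c P) \<le> n" using degP by simp
    fix x assume "x \<in> z ` {..<n}"
    then obtain l where l: "l < n" "x = z l" by auto
    have "poly P x = 0" unfolding P_def poly_prod using l by (auto intro: prod_zero)
    then show "poly (lp n) x = poly (Polynomial.smult c P) x" using roots l by (simp add: poly_lp)
  qed
  define S where "S = {..<n} - {i}"
  define Q where "Q = (\<Prod>l\<in>S. [:- z l, 1:])"
  have PQ: "P = [:- z i, 1:] * Q" unfolding P_def Q_def S_def using i
    by (subst prod.remove[of _ i]) auto
  have d1: "pderiv P = Q + [:- z i, 1:] * pderiv Q"
    unfolding PQ pderiv_mult by (simp add: pderiv_pCons)
  have d2: "pderiv (pderiv P) = 2 * pderiv Q + [:- z i, 1:] * pderiv (pderiv Q)"
    unfolding d1 pderiv_add pderiv_mult by (simp add: pderiv_pCons algebra_simps mult_2)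
  have zz: "z i - z l \<noteq> 0" if "l \<in> S" for l
    using that inj i unfolding S_def by (auto dest: inj_onD)
  have Qz: "poly Q (z i) = (\<Prod>l\<in>S. (z i - z l))" unfolding Q_def poly_prod by simp
  have Q0: "poly Q (z i) \<noteq> 0" unfolding Qz using zz by (simp add: prod_zero_iff S_def)
  have dQ: "poly (pderiv Q) (z i) = poly Q (z i) * (\<Sum>l\<in>S. 1 / (z i - z l))"
  proof -
    have "poly (pderiv Q) (z i) = (\<Sum>a\<in>S. \<Prod>l\<in>S - {a}. (z i - z l))"
      unfolding Q_def pderiv_prod poly_sum by (simp add: poly_prod pderiv_pCons)
    also have "\<dots> = (\<Sum>a\<in>S. poly Q (z i) / (z i - z a))"
      unfolding Qz by (intro sum.cong refl) (use zz in \<open>simp add: prod_diff1 S_def\<close>)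
    finally show ?thesis by (simp add: sum_distrib_left)
  qed
  have ode: "z i * poly (pderiv (pderiv (lp n))) (z i) + (2 - z i) * poly (pderiv (lp n)) (z i) + real n * poly (lp n) (z i) = 0"
    by (rule lag_ode)
  have "poly (lp n) (z i) = 0" using roots i by (simp add: poly_lp)
  moreover have "poly (pderiv (lp n)) (z i) = c * poly Q (z i)"
    unfolding fac pderiv_smult d1 by simp
  moreover have "poly (pderiv (pderiv (lp n))) (z i) = c * (2 * poly (pderiv Q) (z i))"
    unfolding fac pderiv_smult d2 by simp
  ultimately have "c * poly Q (z i) * (2 * z i * (\<Sum>l\<in>S. 1 / (z i - z l)) + (2 - z i)) = 0"
    using ode unfolding dQ by (simp add: algebra_simps)
  then have "2 * z i * (\<Sum>l\<in>S. 1 / (z i - z l)) + (2 - z i) = 0" using c0 Q0 by simp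
  then show ?thesis using zi unfolding S_def by (simp add: field_simps)
qed

definition psum :: "nat \<Rightarrow> (nat \<Rightarrow> nat \<Rightarrow> real) \<Rightarrow> real" where
  "psum N g = (\<Sum>i<N. \<Sum>j\<in>{i<..<N}. g i j)"

lemma offdiag_swap: fixes N :: nat shows "(\<Sum>i<N. \<Sum>j\<in>{..<N}-{i}. h i j) = (\<Sum>i<N. \<Sum>j\<in>{..<N}-{i}. h j i)"
proof -
  have e: "(\<Sum>i<N. \<Sum>j\<in>{..<N}-{i}. h i j) = (\<Sum>i<N. \<Sum>j<N. if j \<noteq> i then h i j else 0)" for h :: "nat \<Rightarrow> nat \<Rightarrow> 'a::comm_monoid_add"
  proof (rule sum.cong[OF refl])
    fix i
    have "(\<Sum>j<N. if j \<noteq> i then h i j else 0) = sum (h i) {j\<in>{..<N}. j \<noteq> i}"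
      by (rule sum.inter_filter[symmetric]) simp
    moreover have "{j\<in>{..<N}. j \<noteq> i} = {..<N}-{i}" by auto
    ultimately show "(\<Sum>j\<in>{..<N}-{i}. h i j) = (\<Sum>j<N. if j \<noteq> i then h i j else 0)"
      by simp
  qed
  show ?thesis unfolding e[of h] e[of "\<lambda>i j. h j i"] by (subst sum.swap) (simp add: eq_commute)
qed

lemma lower_swap: fixes N :: nat shows "(\<Sum>i<N. \<Sum>j<i. g i j) = (\<Sum>j<N. \<Sum>i\<in>{j<..<N}. g i j)"
proof -
  have "(\<Sum>i<N. \<Sum>j<i. g i j) = (\<Sum>i<N. \<Sum>j<N. if j < i then g i j else 0)"
  proof (rule sum.cong[OF refl])
    fix i assume "i \<in> {..<N}"
    then have e: "{j\<in>{..<N}. j < i} = {..<i}" by auto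
    have "(\<Sum>j<N. if j < i then g i j else 0) = sum (g i) {j\<in>{..<N}. j < i}"
      by (rule sum.inter_filter[symmetric]) simp
    then show "(\<Sum>j<i. g i j) = (\<Sum>j<N. if j < i then g i j else 0)"
      unfolding e by simp
  qed
  also have "\<dots> = (\<Sum>j<N. \<Sum>i<N. if j < i then g i j else 0)" by (rule sum.swap)
  also have "\<dots> = (\<Sum>j<N. \<Sum>i\<in>{j<..<N}. g i j)"
  proof (rule sum.cong[OF refl])
    fix j
    have e: "{i\<in>{..<N}. j < i} = {j<..<N}" by auto
    have "(\<Sum>i<N. if j < i then g i j else 0) = sum (\<lambda>i. g i j) {i\<in>{..<N}. j < i}"
      by (rule sum.inter_filter[symmetric]) simp
    then show "(\<Sum>i<N. if j < i then g i j else 0) = (\<Sum>i\<in>{j<..<N}. g i j)"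
      unfolding e by simp
  qed
  finally show ?thesis .
qed

lemma offdiag_split:
  fixes N :: nat
  assumes sym: "\<And>i j. g i j = g j i"
  shows "(\<Sum>i<N. \<Sum>j\<in>{..<N}-{i}. g i j) = 2 * psum N g"
proof -
  have "(\<Sum>i<N. \<Sum>j\<in>{..<N}-{i}. g i j) = (\<Sum>i<N. (\<Sum>j\<in>{i<..<N}. g i j) + (\<Sum>j<i. g i j))"
  proof (rule sum.cong[OF refl])
    fix i assume "i \<in> {..<N}"
    then have "{..<N}-{i} = {i<..<N} \<union> {..<i}" "{i<..<N} \<inter> {..<i} = {}" by auto
    then show "(\<Sum>j\<in>{..<N}-{i}. g i j) = (\<Sum>j\<in>{i<..<N}. g i j) + (\<Sum>j<i. g i j)"
      by (simp add: sum.union_disjoint)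
  qed
  also have "\<dots> = psum N g + (\<Sum>i<N. \<Sum>j<i. g i j)" unfolding psum_def by (simp add: sum.distrib)
  also have "(\<Sum>i<N. \<Sum>j<i. g i j) = psum N g" unfolding lower_swap psum_def by (simp add: sym)
  finally show ?thesis by simp
qed

locale bsetup =
  fixes N :: nat and z r :: "nat \<Rightarrow> real" and S :: "nat \<Rightarrow> nat \<Rightarrow> real" and t :: real
  assumes N: "N \<ge> 1"
    and z_roots: "\<forall>i < N - 1. laguerre (N - 1) 1 (z i) = 0"
    and z_dec: "\<forall>i. Suc i < N - 1 \<longrightarrow> z (Suc i) < z i"
    and z_pos: "N \<ge> 2 \<longrightarrow> z (N - 2) > 0"
    and r_def1: "\<forall>i < N - 1. r i = sqrt (2 * z i)" and r_def2: "r (N - 1) = 0"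
    and S_diag: "\<forall>i < N. S i i = 1 + 2 * (\<Sum>l\<in>{..<N} - {i}. 1 / (r i - r l)\<^sup>2)
                                    + 2 * (\<Sum>l\<in>{..<N} - {i}. 1 / (r i + r l)\<^sup>2)"
    and S_off: "\<forall>i < N. \<forall>j < N. i \<noteq> j \<longrightarrow> S i j = 2 / (r i + r j)\<^sup>2 - 2 / (r i - r j)\<^sup>2"
    and t: "t > 0"
begin

lemma z_mono: "i < j \<Longrightarrow> j < N - 1 \<Longrightarrow> z j < z i"
proof (induction j)
  case 0 then show ?case by simp
next
  case (Suc j)
  then show ?case using z_dec by (cases "i = j") (auto intro: less_trans)
qed

lemma z_posi: "i < N - 1 \<Longrightarrow> z i > 0"
proof -
  assume i: "i < N - 1"
  then have N2: "N \<ge> 2" and "N - 2 < N - 1" by auto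
  then have zp: "z (N - 2) > 0" using z_pos by simp
  show ?thesis
  proof (cases "i = N - 2")
    case True then show ?thesis using zp by simp
  next
    case False then have "i < N - 2" using i by simp
    then have "z (N - 2) < z i" using z_mono[of i "N - 2"] N2 by simp
    then show ?thesis using zp by simp
  qed
qed

lemma r_pos: "i < N - 1 \<Longrightarrow> r i > 0"
  using z_posi r_def1 by simp

lemma r_sq: "i < N - 1 \<Longrightarrow> (r i)\<^sup>2 = 2 * z i"
proof -
  assume i: "i < N - 1"
  then have "z i > 0" by (rule z_posi)
  then show ?thesis using r_def1 i by simp
qed

lemma r_nonneg: "i < N \<Longrightarrow> r i \<ge> 0"
  using r_pos r_def2 by (cases "i = N - 1") (auto intro: less_imp_le)

lemma r_dec: "i < j \<Longrightarrow> j < N \<Longrightarrow> r j < r i"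
proof -
  assume ij: "i < j" "j < N"
  show ?thesis
  proof (cases "j = N - 1")
    case True then show ?thesis using r_def2 r_pos ij by simp
  next
    case False then have "j < N - 1" using ij by simp
    then show ?thesis using z_mono[OF ij(1)] r_def1 ij z_posi by simp
  qed
qed

lemma r_diff: "i < N \<Longrightarrow> j < N \<Longrightarrow> i \<noteq> j \<Longrightarrow> r i - r j \<noteq> 0"
  using r_dec by (cases "i < j") (auto dest: r_dec simp: not_less_iff_gr_or_eq)

lemma r_sum: "i < N \<Longrightarrow> j < N \<Longrightarrow> i \<noteq> j \<Longrightarrow> r i + r j > 0"
proof -
  assume ij: "i < N" "j < N" "i \<noteq> j"
  then have "i < N - 1 \<or> j < N - 1" by auto
  then show ?thesis using r_pos r_nonneg ij by (auto intro: add_pos_nonneg add_nonneg_pos)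
qed

lemma crit: assumes i: "i < N"
  shows "r i = 2 * (\<Sum>l\<in>{..<N}-{i}. 1 / (r i - r l) + 1 / (r i + r l))"
proof (cases "i = N - 1")
  case True
  then show ?thesis using r_def2 by (simp add: diff_divide_distrib[symmetric] sum.neutral)
next
  case False
  define n where "n = N - 1"
  have iN: "i < n" using False i n_def by simp
  have inj: "inj_on z {..<n}"
  proof (rule inj_onI)
    fix a b assume "a \<in> {..<n}" "b \<in> {..<n}" "z a = z b"
    then show "a = b" using z_mono[of a b] z_mono[of b a] n_def by (cases a b rule: linorder_cases) auto
  qed
  have zi: "z i \<noteq> 0" using z_posi[of i] iN n_def by simp
  have rid: "(\<Sum>l\<in>{..<n}-{i}. 1 / (z i - z l)) = (z i - 2) / (2 * z i)"
    by (rule lag_root_identity[OF inj _ iN zi]) (use z_roots n_def in simp)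
  have ri: "r i > 0" using r_pos iN n_def by simp
  have set: "{..<N}-{i} = insert n ({..<n}-{i})" "n \<notin> {..<n}-{i}" using i n_def iN by auto
  have trm: "1 / (r i - r l) + 1 / (r i + r l) = r i / (z i - z l)" if "l \<in> {..<n}-{i}" for l
  proof -
    have l: "l < n" "l \<noteq> i" using that by auto
    have lN: "l < N" "i < N" using l iN n_def by auto
    have d: "r i - r l \<noteq> 0" "r i + r l \<noteq> 0" using r_diff[OF lN(2,1)] r_sum[OF lN(2,1)] l(2) by auto
    have "(r i)\<^sup>2 - (r l)\<^sup>2 = 2 * (z i - z l)" using r_sq l iN n_def by simp
    then have A: "(r i - r l) * (r i + r l) = 2 * (z i - z l)" by (simp add: power2_eq_square algebra_simps)
    have B: "1 / (r i - r l) + 1 / (r i + r l) = 2 * r i / ((r i - r l) * (r i + r l))"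
      using d by (simp add: field_simps)
    show ?thesis unfolding B A by (rule mult_divide_mult_cancel_left) simp
  qed
  have fin: "finite ({..<n}-{i})" by simp
  have "(\<Sum>l\<in>{..<N}-{i}. 1 / (r i - r l) + 1 / (r i + r l))
      = (1 / (r i - r n) + 1 / (r i + r n)) + (\<Sum>l\<in>{..<n}-{i}. 1 / (r i - r l) + 1 / (r i + r l))"
    unfolding set(1) by (rule sum.insert[OF fin set(2)])
  also have "1 / (r i - r n) + 1 / (r i + r n) = 2 / r i" using r_def2 n_def by simp
  also have "(\<Sum>l\<in>{..<n}-{i}. 1 / (r i - r l) + 1 / (r i + r l)) = (\<Sum>l\<in>{..<n}-{i}. r i * (1 / (z i - z l)))"
    by (rule sum.cong[OF refl]) (simp add: trm)
  also have "\<dots> = r i * ((z i - 2) / (2 * z i))" by (simp only: sum_distrib_left[symmetric] rid)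
  finally have "(\<Sum>l\<in>{..<N}-{i}. 1 / (r i - r l) + 1 / (r i + r l)) = 2 / r i + r i * ((z i - 2) / (2 * z i))" .
  also have "\<dots> = r i / 2" using r_sq[of i] iN n_def ri z_posi[of i]
    by (simp add: field_simps power2_eq_square)
  finally show ?thesis by simp
qed

end

lemma frac_sym: "((a::real) - b) / (c - d) = (b - a) / (d - c)"
  by (metis minus_diff_eq minus_divide_divide)

lemma frac_split: "((a::real) - b) / (c - d) = a / (c - d) + b / (d - c)"
proof -
  have "d - c = - (c - d)" by simp
  then show ?thesis by (simp only: diff_divide_distrib divide_minus_right)
qed

context bsetup
begin

lemma lin_id:
  "(\<Sum>i<N. r i * w i) = 2 * psum N (\<lambda>i j. (w i - w j) / (r i - r j) + (w i + w j) / (r i + r j))"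
proof -
  let ?g = "\<lambda>i j. (w i - w j) / (r i - r j) + (w i + w j) / (r i + r j)"
  have "2 * psum N ?g = (\<Sum>i<N. \<Sum>j\<in>{..<N}-{i}. ?g i j)"
    by (rule offdiag_split[symmetric]) (metis frac_sym add.commute)
  also have "\<dots> = (\<Sum>i<N. \<Sum>j\<in>{..<N}-{i}. (w i / (r i - r j) + w i / (r i + r j)) + (w j / (r j - r i) + w j / (r j + r i)))"
  proof (intro sum.cong refl)
    fix i j assume "i \<in> {..<N}" "j \<in> {..<N}-{i}"
    show "?g i j = (w i / (r i - r j) + w i / (r i + r j)) + (w j / (r j - r i) + w j / (r j + r i))"
      unfolding frac_split[of "w i" "w j"] add_divide_distrib by (simp add: add.commute)
  qed
  also have "\<dots> = (\<Sum>i<N. \<Sum>j\<in>{..<N}-{i}. w i / (r i - r j) + w i / (r i + r j))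
                 + (\<Sum>i<N. \<Sum>j\<in>{..<N}-{i}. w j / (r j - r i) + w j / (r j + r i))"
    by (simp add: sum.distrib)
  also have "(\<Sum>i<N. \<Sum>j\<in>{..<N}-{i}. w j / (r j - r i) + w j / (r j + r i))
           = (\<Sum>i<N. \<Sum>j\<in>{..<N}-{i}. w i / (r i - r j) + w i / (r i + r j))"
    by (rule offdiag_swap[where h = "\<lambda>i j. w i / (r i - r j) + w i / (r i + r j)", symmetric])
  also have "(\<Sum>i<N. \<Sum>j\<in>{..<N}-{i}. w i / (r i - r j) + w i / (r i + r j))
           = (\<Sum>i<N. w i * (\<Sum>j\<in>{..<N}-{i}. 1 / (r i - r j) + 1 / (r i + r j)))"
    by (simp add: sum_distrib_left distrib_left)
  also have "\<dots> = (\<Sum>i<N. w i * r i / 2)"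
    by (intro sum.cong refl) (subst (2) crit, auto)
  finally show ?thesis by (simp add: sum_divide_distrib[symmetric] mult.commute)
qed

lemma S_sym: "i < N \<Longrightarrow> j < N \<Longrightarrow> S i j = S j i"
  using S_off by (cases "i = j") (auto simp: power2_commute add.commute)

lemma quad_id:
  "qf N S w = (\<Sum>i<N. (w i)\<^sup>2) + 2 * psum N (\<lambda>i j. (w i - w j)\<^sup>2 / (r i - r j)\<^sup>2 + (w i + w j)\<^sup>2 / (r i + r j)\<^sup>2)"
proof -
  define a where "a i j = 1 / (r i - r j)\<^sup>2" for i j
  define b where "b i j = 1 / (r i + r j)\<^sup>2" for i j
  define h1 where "h1 i j = (a i j + b i j) * (w i)\<^sup>2 + (b i j - a i j) * w i * w j" for i j
  have asym: "a i j = a j i" "b i j = b j i" for i j unfolding a_def b_def by (auto simp: power2_commute add.commute)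
  have "qf N S w = (\<Sum>i<N. w i * S i i * w i + (\<Sum>j\<in>{..<N}-{i}. w i * S i j * w j))"
    unfolding qf_def by (intro sum.cong refl) (rule sum.remove, auto)
  also have "\<dots> = (\<Sum>i<N. (w i)\<^sup>2 + (\<Sum>j\<in>{..<N}-{i}. 2 * h1 i j))"
  proof (intro sum.cong refl)
    fix i assume i: "i \<in> {..<N}"
    have "(\<Sum>j\<in>{..<N}-{i}. w i * S i j * w j) = (\<Sum>j\<in>{..<N}-{i}. 2 * (b i j - a i j) * w i * w j)"
      using i S_off unfolding a_def b_def by (intro sum.cong refl) (auto simp: diff_divide_distrib)
    moreover have "w i * S i i * w i = (w i)\<^sup>2 + (\<Sum>j\<in>{..<N}-{i}. 2 * (a i j + b i j) * (w i)\<^sup>2)"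
      using i S_diag unfolding a_def b_def
      by (simp add: sum.distrib sum_distrib_left sum_distrib_right power2_eq_square algebra_simps)
    ultimately show "w i * S i i * w i + (\<Sum>j\<in>{..<N}-{i}. w i * S i j * w j) = (w i)\<^sup>2 + (\<Sum>j\<in>{..<N}-{i}. 2 * h1 i j)"
      unfolding h1_def by (simp add: sum.distrib[symmetric] algebra_simps)
  qed
  also have "\<dots> = (\<Sum>i<N. (w i)\<^sup>2) + (\<Sum>i<N. \<Sum>j\<in>{..<N}-{i}. h1 i j + h1 j i)"
  proof -
    have "(\<Sum>i<N. \<Sum>j\<in>{..<N}-{i}. h1 i j + h1 j i) = (\<Sum>i<N. \<Sum>j\<in>{..<N}-{i}. h1 i j) + (\<Sum>i<N. \<Sum>j\<in>{..<N}-{i}. h1 j i)"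
      by (simp add: sum.distrib)
    also have "(\<Sum>i<N. \<Sum>j\<in>{..<N}-{i}. h1 j i) = (\<Sum>i<N. \<Sum>j\<in>{..<N}-{i}. h1 i j)"
      by (rule offdiag_swap[symmetric])
    finally show ?thesis by (simp add: sum.distrib sum_distrib_left)
  qed
  also have "(\<Sum>i<N. \<Sum>j\<in>{..<N}-{i}. h1 i j + h1 j i)
     = 2 * psum N (\<lambda>i j. (w i - w j)\<^sup>2 / (r i - r j)\<^sup>2 + (w i + w j)\<^sup>2 / (r i + r j)\<^sup>2)"
  proof -
    have "h1 i j + h1 j i = (w i - w j)\<^sup>2 / (r i - r j)\<^sup>2 + (w i + w j)\<^sup>2 / (r i + r j)\<^sup>2" for i j
    proof -
      have "(w i - w j)\<^sup>2 / (r i - r j)\<^sup>2 + (w i + w j)\<^sup>2 / (r i + r j)\<^sup>2 = a i j * (w i - w j)\<^sup>2 + b i j * (w i + w j)\<^sup>2"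
        unfolding a_def b_def by simp
      then show ?thesis unfolding h1_def asym(1)[of j i] asym(2)[of j i]
        by (simp add: power2_eq_square algebra_simps)
    qed
    then show ?thesis
      by (simp only:) (rule offdiag_split, simp add: power2_commute add.commute)
  qed
  finally show ?thesis .
qed

lemma qf_ge: "qf N S w \<ge> (\<Sum>i<N. (w i)\<^sup>2)"
proof -
  have "psum N (\<lambda>i j. (w i - w j)\<^sup>2 / (r i - r j)\<^sup>2 + (w i + w j)\<^sup>2 / (r i + r j)\<^sup>2) \<ge> 0"
    unfolding psum_def by (intro sum_nonneg add_nonneg_nonneg divide_nonneg_nonneg zero_le_power2)
  then show ?thesis unfolding quad_id by linarith
qed

end

lemma psi_lim: "((\<lambda>x::real. (ln (1 + x) - x) / x\<^sup>2) \<longlongrightarrow> - 1 / 2) (at 0)"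
proof (rule lhopital[where f' = "\<lambda>x. 1 / (1 + x) - 1" and g' = "\<lambda>x. 2 * x"])
  have ev: "eventually (\<lambda>x::real. x \<noteq> 0 \<and> x > -1) (at 0)"
  proof -
    have "eventually (\<lambda>x::real. x \<in> {-1<..<1}) (at 0)"
      by (intro eventually_at_in_open') auto
    moreover have "eventually (\<lambda>x::real. x \<noteq> 0) (at 0)" by (rule eventually_neq_at_within)
    ultimately show ?thesis by eventually_elim auto
  qed
  show "((\<lambda>x::real. ln (1 + x) - x) \<longlongrightarrow> 0) (at 0)"
  proof -
    have "((\<lambda>x::real. ln (1 + x) - x) \<longlongrightarrow> ln (1 + 0) - 0) (at 0)"
      by (intro tendsto_intros) auto
    then show ?thesis by simp
  qed
  show "((\<lambda>x::real. x\<^sup>2) \<longlongrightarrow> 0) (at 0)"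
  proof -
    have "((\<lambda>x::real. x\<^sup>2) \<longlongrightarrow> 0\<^sup>2) (at 0)" by (intro tendsto_intros)
    then show ?thesis by simp
  qed
  show "eventually (\<lambda>x::real. x\<^sup>2 \<noteq> 0) (at 0)" using ev by eventually_elim auto
  show "eventually (\<lambda>x::real. 2 * x \<noteq> 0) (at 0)" using ev by eventually_elim auto
  show "eventually (\<lambda>x::real. DERIV (\<lambda>x. ln (1 + x) - x) x :> 1 / (1 + x) - 1) (at 0)"
    using ev by eventually_elim (auto intro!: derivative_eq_intros)
  show "eventually (\<lambda>x::real. DERIV (\<lambda>x. x\<^sup>2) x :> 2 * x) (at 0)"
    by (intro always_eventually allI) (auto intro!: derivative_eq_intros)
  have "((\<lambda>x::real. - 1 / (2 * (1 + x))) \<longlongrightarrow> - 1 / (2 * (1 + 0))) (at 0)"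
    by (intro tendsto_intros) auto
  then have "((\<lambda>x::real. - 1 / (2 * (1 + x))) \<longlongrightarrow> - 1 / 2) (at 0)" by simp
  moreover have "eventually (\<lambda>x::real. - 1 / (2 * (1 + x)) = (1 / (1 + x) - 1) / (2 * x)) (at 0)"
    using ev
  proof eventually_elim
    case (elim x)
    then have h: "1 + x \<noteq> 0" "x \<noteq> 0" by auto
    have "x * 2 + x * (x * 2) = 2 * x * (1 + x)" by (simp add: algebra_simps)
    then have "x * 2 + x * (x * 2) \<noteq> 0" using h by simp
    then show ?case using h by (simp add: field_simps)
  qed
  ultimately show "((\<lambda>x::real. (1 / (1 + x) - 1) / (2 * x)) \<longlongrightarrow> - 1 / 2) (at 0)"
    using tendsto_cong by fastforce
qed

lemma ln_lim:
  fixes a t :: real assumes t: "t > 0"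
  shows "((\<lambda>k. 2 * k * (ln (1 + a / sqrt (k * t)) - a / sqrt (k * t))) \<longlongrightarrow> - a\<^sup>2 / t) at_top"
proof (cases "a = 0")
  case True then show ?thesis by simp
next
  case False
  define x where "x k = a / sqrt (k * t)" for k
  have st: "filterlim (\<lambda>k. sqrt (k * t)) at_top at_top"
  proof (rule filterlim_compose[OF sqrt_at_top])
    show "filterlim (\<lambda>k. k * t) at_top at_top"
      using filterlim_tendsto_pos_mult_at_top[OF tendsto_const t filterlim_ident] by (simp add: mult.commute)
  qed
  have x0: "(x \<longlongrightarrow> 0) at_top"
    unfolding x_def by (rule tendsto_divide_0[OF tendsto_const filterlim_at_top_imp_at_infinity[OF st]])
  have evpos: "eventually (\<lambda>k::real. k > 0) at_top" by (rule eventually_gt_at_top)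
  have "filterlim x (at 0) at_top"
  proof (rule filterlim_atI[OF x0])
    show "eventually (\<lambda>k. x k \<noteq> 0) at_top" using evpos
      by eventually_elim (use False t in \<open>auto simp: x_def\<close>)
  qed
  from filterlim_compose[OF psi_lim this]
  have "((\<lambda>k. (ln (1 + x k) - x k) / (x k)\<^sup>2) \<longlongrightarrow> - 1 / 2) at_top" .
  then have "((\<lambda>k. (2 * a\<^sup>2 / t) * ((ln (1 + x k) - x k) / (x k)\<^sup>2)) \<longlongrightarrow> (2 * a\<^sup>2 / t) * (- 1 / 2)) at_top"
    by (rule tendsto_mult_left)
  moreover have "eventually (\<lambda>k. (2 * a\<^sup>2 / t) * ((ln (1 + x k) - x k) / (x k)\<^sup>2) = 2 * k * (ln (1 + x k) - x k)) at_top"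
    using evpos
  proof eventually_elim
    case (elim k)
    have "(x k)\<^sup>2 = a\<^sup>2 / (k * t)" unfolding x_def using elim t by (simp add: power_divide)
    then have a2: "a\<^sup>2 = k * t * (x k)\<^sup>2" using elim t by (simp add: field_simps)
    have "x k \<noteq> 0" using False elim t by (simp add: x_def)
    then show ?case unfolding a2 using elim t by (simp add: field_simps)
  qed
  ultimately show ?thesis unfolding x_def[symmetric] using tendsto_cong by fastforce
qed

lemma psum_add: "psum N (\<lambda>i j. f i j + g i j) = psum N f + psum N g"
  unfolding psum_def by (simp add: sum.distrib)

lemma psum_cmult: "psum N (\<lambda>i j. c * f i j) = c * psum N f"
  unfolding psum_def by (simp add: sum_distrib_left)

lemma psum_divide: "psum N (\<lambda>i j. f i j / c) = psum N f / c"
  unfolding psum_def by (simp add: sum_divide_distrib)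

lemma psum_cong: "(\<And>i j. i < j \<Longrightarrow> j < N \<Longrightarrow> f i j = g i j) \<Longrightarrow> psum N f = psum N g"
  unfolding psum_def by (intro sum.cong refl) auto

lemma psum_nonpos: "(\<And>i j. i < j \<Longrightarrow> j < N \<Longrightarrow> f i j \<le> 0) \<Longrightarrow> psum N f \<le> 0"
  unfolding psum_def by (intro sum_nonpos) auto

lemma tendsto_psum:
  "(\<And>i j. i < j \<Longrightarrow> j < N \<Longrightarrow> ((\<lambda>k. f k i j) \<longlongrightarrow> l i j) F) \<Longrightarrow> ((\<lambda>k. psum N (f k)) \<longlongrightarrow> psum N l) F"
  unfolding psum_def by (intro tendsto_sum) auto

lemma chamber_mono:
  assumes y: "y \<in> chamberD N" and ij: "i \<le> j" "j \<le> N - 2"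
  shows "y j \<le> y i"
  using ij
proof (induction j)
  case 0 then show ?case by simp
next
  case (Suc j)
  show ?case
  proof (cases "i = Suc j")
    case True then show ?thesis by simp
  next
    case False
    then have "i \<le> j" "j \<le> N - 2" using Suc.prems by auto
    then have "y j \<le> y i" by (rule Suc.IH)
    moreover have "y (Suc j) \<le> y j" using y Suc.prems unfolding chamberD_def by auto
    ultimately show ?thesis by simp
  qed
qed

lemma chamber_abs:
  assumes y: "y \<in> chamberD N" and ij: "i < j" "j < N"
  shows "\<bar>y j\<bar> \<le> y i"
proof -
  have N2: "2 \<le> N" using ij by simp
  have last: "\<bar>y (N - 1)\<bar> \<le> y (N - 2)" using y N2 unfolding chamberD_def by auto
  have i2: "i \<le> N - 2" using ij by simp
  show ?thesis
  proof (cases "j = N - 1")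
    case True
    then show ?thesis using last chamber_mono[OF y i2 order.refl] by simp
  next
    case False
    then have j2: "j \<le> N - 2" using ij by simp
    have "y (N - 2) \<le> y j" by (rule chamber_mono[OF y j2 order.refl])
    moreover have "0 \<le> y (N - 2)" using last by simp
    moreover have "y j \<le> y i" using chamber_mono[OF y _ j2] ij by simp
    ultimately show ?thesis by simp
  qed
qed

context bsetup
begin

definition good :: "(nat \<Rightarrow> real) \<Rightarrow> bool" where
  "good y \<longleftrightarrow> (\<forall>i j. i < j \<and> j < N \<longrightarrow> y i - y j > 0 \<and> y i + y j > 0)"

definition Phi :: "real \<Rightarrow> (nat \<Rightarrow> real) \<Rightarrow> real" where
  "Phi k y = - (\<Sum>i<N. (y i)\<^sup>2) / (2 * t) + 2 * k * psum N (\<lambda>i j. ln (y i - y j) + ln (y i + y j))"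

definition cc :: "real \<Rightarrow> nat \<Rightarrow> real" where
  "cc k = (\<lambda>i\<in>{..<N}. sqrt (k * t) * r i)"

definition Yk :: "real \<Rightarrow> (nat \<Rightarrow> real) \<Rightarrow> nat \<Rightarrow> real" where
  "Yk k w = (\<lambda>i\<in>{..<N}. w i + sqrt (k * t) * r i)"

definition gk :: "real \<Rightarrow> (nat \<Rightarrow> real) \<Rightarrow> real" where
  "gk k w = besselD_dens N k t (Yk k w) / besselD_dens N k t (cc k)"

definition psi :: "real \<Rightarrow> real" where
  "psi x = ln (1 + x) - x"

definition al :: "(nat \<Rightarrow> real) \<Rightarrow> nat \<Rightarrow> nat \<Rightarrow> real" where
  "al w i j = (w i - w j) / (r i - r j)"

definition be :: "(nat \<Rightarrow> real) \<Rightarrow> nat \<Rightarrow> nat \<Rightarrow> real" where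
  "be w i j = (w i + w j) / (r i + r j)"

lemma good_chamber:
  assumes y: "y \<in> PiE {..<N} (\<lambda>_. UNIV)" and g: "good y"
  shows "y \<in> chamberD N"
proof -
  have 1: "y (Suc i) \<le> y i" if "Suc i < N - 1" for i
  proof -
    have "i < Suc i" "Suc i < N" using that by auto
    then have "y i - y (Suc i) > 0" using g unfolding good_def by blast
    then show ?thesis by simp
  qed
  have 2: "\<bar>y (N - 1)\<bar> \<le> y (N - 2)" if "2 \<le> N"
  proof -
    have "N - 2 < N - 1" "N - 1 < N" using that by auto
    then have "y (N - 2) - y (N - 1) > 0 \<and> y (N - 2) + y (N - 1) > 0" using g unfolding good_def by blast
    then show ?thesis by linarith
  qed
  show ?thesis unfolding chamberD_def using y 1 2 by auto
qed

lemma dens_good: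
  assumes y: "y \<in> PiE {..<N} (\<lambda>_. UNIV)" and g: "good y"
  shows "besselD_dens N k t y = exp (Phi k y)"
proof -
  have pw: "((y i)\<^sup>2 - (y j)\<^sup>2) powr (2 * k) = exp (2 * k * (ln (y i - y j) + ln (y i + y j)))"
    if "i < j" "j < N" for i j
  proof -
    have p: "y i - y j > 0" "y i + y j > 0" using g that unfolding good_def by auto
    have "(y i)\<^sup>2 - (y j)\<^sup>2 = (y i - y j) * (y i + y j)" by (simp add: power2_eq_square algebra_simps)
    then have "ln ((y i)\<^sup>2 - (y j)\<^sup>2) = ln (y i - y j) + ln (y i + y j)" using p by (simp add: ln_mult)
    moreover have "(y i)\<^sup>2 - (y j)\<^sup>2 > 0" using p \<open>(y i)\<^sup>2 - (y j)\<^sup>2 = _\<close> by simp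
    ultimately show ?thesis by (simp add: powr_def mult_ac)
  qed
  have "(\<Prod>i<N. \<Prod>j\<in>{i<..<N}. ((y i)\<^sup>2 - (y j)\<^sup>2) powr (2 * k))
      = (\<Prod>i<N. \<Prod>j\<in>{i<..<N}. exp (2 * k * (ln (y i - y j) + ln (y i + y j))))"
    by (intro prod.cong refl) (simp add: pw)
  also have "\<dots> = exp (2 * k * psum N (\<lambda>i j. ln (y i - y j) + ln (y i + y j)))"
    unfolding psum_def by (simp add: exp_sum sum_distrib_left)
  finally show ?thesis
    unfolding besselD_dens_def Phi_def using good_chamber[OF y g] by (simp add: exp_add[symmetric])
qed

lemma dens_notgood:
  assumes k: "k > 0" and g: "\<not> good y"
  shows "besselD_dens N k t y = 0"
proof (cases "y \<in> chamberD N")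
  case False then show ?thesis unfolding besselD_dens_def by simp
next
  case True
  from g obtain i j where ij: "i < j" "j < N" and np: "\<not> (y i - y j > 0 \<and> y i + y j > 0)"
    unfolding good_def by blast
  have "\<bar>y j\<bar> \<le> y i" by (rule chamber_abs[OF True ij])
  with np have "y i - y j = 0 \<or> y i + y j = 0" by linarith
  then have "(y i)\<^sup>2 - (y j)\<^sup>2 = 0"
    by (auto simp: power2_eq_square algebra_simps) (metis add_eq_0_iff2 minus_mult_minus)
  then have "(\<Prod>j\<in>{i<..<N}. ((y i)\<^sup>2 - (y j)\<^sup>2) powr (2 * k)) = 0"
    using ij by (intro prod_zero) (auto intro!: bexI[of _ j])
  note inner = this
  have iin: "i \<in> {..<N}" using ij by simp
  have "(\<Prod>i<N. \<Prod>j\<in>{i<..<N}. ((y i)\<^sup>2 - (y j)\<^sup>2) powr (2 * k)) = 0"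
    by (rule prod_zero) (simp, use iin inner in blast)
  then show ?thesis unfolding besselD_dens_def by simp
qed

lemma mul_one_plus: "(s::real) \<noteq> 0 \<Longrightarrow> d \<noteq> 0 \<Longrightarrow> s * d * (1 + x / d / s) = s * d + x"
  by (simp add: field_simps)

lemma cc_PiE: "cc k \<in> PiE {..<N} (\<lambda>_. UNIV)" unfolding cc_def by simp
lemma Yk_PiE: "Yk k w \<in> PiE {..<N} (\<lambda>_. UNIV)" unfolding Yk_def by simp

lemma cc_good: assumes k: "k > 0" shows "good (cc k)"
  unfolding good_def cc_def
proof (intro allI impI)
  fix i j assume ij: "i < j \<and> j < N"
  have s: "sqrt (k * t) > 0" using k t by simp
  have "r i - r j > 0" using r_dec ij by simp
  moreover have "r i + r j > 0" using r_sum ij by simp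
  ultimately show "(\<lambda>i\<in>{..<N}. sqrt (k * t) * r i) i - (\<lambda>i\<in>{..<N}. sqrt (k * t) * r i) j > 0 \<and>
        (\<lambda>i\<in>{..<N}. sqrt (k * t) * r i) i + (\<lambda>i\<in>{..<N}. sqrt (k * t) * r i) j > 0"
    using ij s by (simp add: right_diff_distrib[symmetric] distrib_left[symmetric])
qed

lemma dens_cc_pos: "k > 0 \<Longrightarrow> besselD_dens N k t (cc k) > 0"
  using dens_good[OF cc_PiE cc_good] by simp

lemma Phi_diff:
  assumes k: "k > 0" and g: "good (Yk k w)"
  shows "Phi k (Yk k w) - Phi k (cc k) = - (\<Sum>i<N. (w i)\<^sup>2) / (2 * t)
     + 2 * k * psum N (\<lambda>i j. psi (al w i j / sqrt (k * t)) + psi (be w i j / sqrt (k * t)))"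
proof -
  define s where "s = sqrt (k * t)"
  have s: "s > 0" using k t by (simp add: s_def)
  have s2: "s\<^sup>2 = k * t" using k t by (simp add: s_def)
  have Y: "Yk k w i = w i + s * r i" if "i < N" for i using that by (simp add: Yk_def s_def)
  have C: "cc k i = s * r i" if "i < N" for i using that by (simp add: cc_def s_def)
  have pair: "(ln (Yk k w i - Yk k w j) + ln (Yk k w i + Yk k w j)) - (ln (cc k i - cc k j) + ln (cc k i + cc k j))
      = psi (al w i j / s) + psi (be w i j / s) + (al w i j + be w i j) / s" if ij: "i < j" "j < N" for i j
  proof -
    have iN: "i < N" using ij by simp
    have rd: "r i - r j > 0" using r_dec ij by simp
    have rs: "r i + r j > 0" using r_sum ij by simp
    have gp: "Yk k w i - Yk k w j > 0" "Yk k w i + Yk k w j > 0" using g ij unfolding good_def by auto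
    have e1: "Yk k w i - Yk k w j = (s * (r i - r j)) * (1 + al w i j / s)"
      unfolding Y[OF iN] Y[OF ij(2)] al_def using s rd by (subst mul_one_plus) (auto simp: algebra_simps)
    have e2: "Yk k w i + Yk k w j = (s * (r i + r j)) * (1 + be w i j / s)"
      unfolding Y[OF iN] Y[OF ij(2)] be_def using s rs by (subst mul_one_plus) (auto simp: algebra_simps)
    have c1: "cc k i - cc k j = s * (r i - r j)" "cc k i + cc k j = s * (r i + r j)"
      unfolding C[OF iN] C[OF ij(2)] by (simp_all add: algebra_simps)
    have p1: "1 + al w i j / s > 0" using gp(1) unfolding e1 by (rule zero_less_mult_pos) (use s rd in simp)
    have p2: "1 + be w i j / s > 0" using gp(2) unfolding e2 by (rule zero_less_mult_pos) (use s rs in simp)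
    have "ln (Yk k w i - Yk k w j) = ln (s * (r i - r j)) + ln (1 + al w i j / s)"
      unfolding e1 using s rd p1 by (simp add: ln_mult)
    moreover have "ln (Yk k w i + Yk k w j) = ln (s * (r i + r j)) + ln (1 + be w i j / s)"
      unfolding e2 using s rs p2 by (simp add: ln_mult)
    ultimately show ?thesis unfolding c1 psi_def by (simp add: add_divide_distrib)
  qed
  have sq: "(\<Sum>i<N. (Yk k w i)\<^sup>2) - (\<Sum>i<N. (cc k i)\<^sup>2) = (\<Sum>i<N. (w i)\<^sup>2) + 2 * s * (\<Sum>i<N. r i * w i)"
  proof -
    have "(\<Sum>i<N. (Yk k w i)\<^sup>2) - (\<Sum>i<N. (cc k i)\<^sup>2) = (\<Sum>i<N. (w i)\<^sup>2 + 2 * s * (r i * w i))"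
      unfolding sum_subtractf[symmetric] by (intro sum.cong refl) (simp add: Y C power2_eq_square algebra_simps)
    then show ?thesis by (simp add: sum.distrib sum_distrib_left)
  qed
  have ps: "psum N (\<lambda>i j. ln (Yk k w i - Yk k w j) + ln (Yk k w i + Yk k w j)) - psum N (\<lambda>i j. ln (cc k i - cc k j) + ln (cc k i + cc k j))
      = psum N (\<lambda>i j. psi (al w i j / s) + psi (be w i j / s)) + (\<Sum>i<N. r i * w i) / (2 * s)"
  proof -
    have "psum N (\<lambda>i j. ln (Yk k w i - Yk k w j) + ln (Yk k w i + Yk k w j)) - psum N (\<lambda>i j. ln (cc k i - cc k j) + ln (cc k i + cc k j))
        = psum N (\<lambda>i j. (psi (al w i j / s) + psi (be w i j / s)) + (al w i j + be w i j) / s)"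
      unfolding psum_def sum_subtractf[symmetric] using pair by (intro sum.cong refl) (auto simp: psum_def)
    also have "\<dots> = psum N (\<lambda>i j. psi (al w i j / s) + psi (be w i j / s)) + psum N (\<lambda>i j. al w i j + be w i j) / s"
      by (simp add: psum_add psum_divide)
    also have "psum N (\<lambda>i j. al w i j + be w i j) = (\<Sum>i<N. r i * w i) / 2"
      using lin_id[of w] unfolding al_def be_def by simp
    finally show ?thesis by simp
  qed
  have ks: "k / s = s / t" using s2 s t by (simp add: field_simps power2_eq_square)
  have "Phi k (Yk k w) - Phi k (cc k) = - ((\<Sum>i<N. (Yk k w i)\<^sup>2) - (\<Sum>i<N. (cc k i)\<^sup>2)) / (2 * t)
      + 2 * k * (psum N (\<lambda>i j. ln (Yk k w i - Yk k w j) + ln (Yk k w i + Yk k w j)) - psum N (\<lambda>i j. ln (cc k i - cc k j) + ln (cc k i + cc k j)))"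
    unfolding Phi_def by (simp add: algebra_simps diff_divide_distrib)
  also have "\<dots> = - (\<Sum>i<N. (w i)\<^sup>2) / (2 * t) + 2 * k * psum N (\<lambda>i j. psi (al w i j / s) + psi (be w i j / s))
      + (k / s - s / t) * (\<Sum>i<N. r i * w i)"
    unfolding sq ps using s t by (simp add: field_simps)
  finally have eq: "Phi k (Yk k w) - Phi k (cc k) = - (\<Sum>i<N. (w i)\<^sup>2) / (2 * t) + 2 * k * psum N (\<lambda>i j. psi (al w i j / s) + psi (be w i j / s))
      + (k / s - s / t) * (\<Sum>i<N. r i * w i)" .
  have z0: "(k / s - s / t) * (\<Sum>i<N. r i * w i) = 0" using ks by simp
  from eq z0 have "Phi k (Yk k w) - Phi k (cc k) = - (\<Sum>i<N. (w i)\<^sup>2) / (2 * t) + 2 * k * psum N (\<lambda>i j. psi (al w i j / s) + psi (be w i j / s))"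
    by simp
  then show ?thesis unfolding s_def .
qed

lemma gk_good:
  assumes k: "k > 0" and g: "good (Yk k w)"
  shows "gk k w = exp (- (\<Sum>i<N. (w i)\<^sup>2) / (2 * t)
     + 2 * k * psum N (\<lambda>i j. psi (al w i j / sqrt (k * t)) + psi (be w i j / sqrt (k * t))))"
  unfolding gk_def dens_good[OF Yk_PiE g] dens_good[OF cc_PiE cc_good[OF k]] Phi_diff[OF k g, symmetric]
  by (simp add: exp_diff)

lemma gk_notgood: "k > 0 \<Longrightarrow> \<not> good (Yk k w) \<Longrightarrow> gk k w = 0"
  unfolding gk_def by (simp add: dens_notgood)

lemma psi_le: "x > -1 \<Longrightarrow> psi x \<le> 0"
  unfolding psi_def using ln_le_minus_one[of "1 + x"] by simp

lemma gk_bound: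
  assumes k: "k > 0"
  shows "0 \<le> gk k w \<and> gk k w \<le> exp (- (\<Sum>i<N. (w i)\<^sup>2) / (2 * t))"
proof (cases "good (Yk k w)")
  case False then show ?thesis using gk_notgood[OF k] by simp
next
  case True
  define s where "s = sqrt (k * t)"
  have s: "s > 0" using k t by (simp add: s_def)
  have "psum N (\<lambda>i j. psi (al w i j / s) + psi (be w i j / s)) \<le> 0"
  proof (rule psum_nonpos)
    fix i j assume ij: "i < j" "j < N"
    have rd: "r i - r j > 0" using r_dec ij by simp
    have rs: "r i + r j > 0" using r_sum ij by simp
    have gp: "Yk k w i - Yk k w j > 0" "Yk k w i + Yk k w j > 0" using True ij unfolding good_def by auto
    have "Yk k w i - Yk k w j = s * (r i - r j) * (1 + al w i j / s)"
      using ij s rd unfolding Yk_def al_def s_def[symmetric] by (subst mul_one_plus) (auto simp: algebra_simps)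
    then have "1 + al w i j / s > 0" using gp(1) by (metis zero_less_mult_pos s rd diff_gt_0_iff_gt mult_pos_pos)
    moreover have "Yk k w i + Yk k w j = s * (r i + r j) * (1 + be w i j / s)"
      using ij s rs unfolding Yk_def be_def s_def[symmetric] by (subst mul_one_plus) (auto simp: algebra_simps)
    then have "1 + be w i j / s > 0" using gp(2) by (metis zero_less_mult_pos s rs mult_pos_pos)
    ultimately show "psi (al w i j / s) + psi (be w i j / s) \<le> 0"
      using psi_le[of "al w i j / s"] psi_le[of "be w i j / s"] by simp
  qed
  then have "2 * k * psum N (\<lambda>i j. psi (al w i j / s) + psi (be w i j / s)) \<le> 0"
    using k by (simp add: mult_nonneg_nonpos)
  then show ?thesis unfolding gk_good[OF k True] s_def[symmetric] by simp
qed

end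

lemma sqrt_kt_lim: assumes t: "(t::real) > 0" shows "filterlim (\<lambda>k. sqrt (k * t)) at_top at_top"
proof (rule filterlim_compose[OF sqrt_at_top])
  show "filterlim (\<lambda>k. k * t) at_top at_top"
    using filterlim_tendsto_pos_mult_at_top[OF tendsto_const t filterlim_ident] by (simp add: mult.commute)
qed

context bsetup
begin

lemma eventually_good: "eventually (\<lambda>k. k > 0 \<and> good (Yk k w)) at_top"
proof -
  have pair: "eventually (\<lambda>k. i < j \<longrightarrow> (Yk k w i - Yk k w j > 0 \<and> Yk k w i + Yk k w j > 0)) at_top"
    if "(i, j) \<in> {..<N} \<times> {..<N}" for i j
  proof (cases "i < j")
    case False then show ?thesis by simp
  next
    case True
    have ij: "i < N" "j < N" using that by auto
    define d where "d = r i - r j"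
    define e where "e = r i + r j"
    have d: "d > 0" using r_dec True ij unfolding d_def by simp
    have e: "e > 0" using r_sum True ij unfolding e_def by simp
    define X where "X = \<bar>w i\<bar> + \<bar>w j\<bar> + 1"
    have "eventually (\<lambda>k. X / d + X / e \<le> sqrt (k * t)) at_top"
      using sqrt_kt_lim[OF t] unfolding filterlim_at_top by blast
    then show ?thesis
    proof eventually_elim
      case (elim k)
      have X: "X > 0" unfolding X_def by simp
      have "X / d \<le> sqrt (k * t)" using elim X e by (smt (verit) divide_pos_pos)
      then have 1: "X \<le> sqrt (k * t) * d" using d by (simp add: field_simps)
      have "X / e \<le> sqrt (k * t)" using elim X d by (smt (verit) divide_pos_pos)
      then have 2: "X \<le> sqrt (k * t) * e" using e by (simp add: field_simps)
      have "Yk k w i - Yk k w j = (w i - w j) + sqrt (k * t) * d"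
        using ij unfolding Yk_def d_def by (simp add: algebra_simps)
      moreover have "Yk k w i + Yk k w j = (w i + w j) + sqrt (k * t) * e"
        using ij unfolding Yk_def e_def by (simp add: algebra_simps)
      ultimately show ?case using 1 2 unfolding X_def by auto
    qed
  qed
  have "eventually (\<lambda>k. \<forall>p\<in>{..<N} \<times> {..<N}. fst p < snd p \<longrightarrow> (Yk k w (fst p) - Yk k w (snd p) > 0 \<and> Yk k w (fst p) + Yk k w (snd p) > 0)) at_top"
    by (rule eventually_ball_finite) (use pair in auto)
  moreover have "eventually (\<lambda>k::real. k > 0) at_top" by (rule eventually_gt_at_top)
  ultimately show ?thesis
  proof eventually_elim
    case (elim k)
    have "good (Yk k w)" unfolding good_def
    proof (intro allI impI)
      fix i j assume "i < j \<and> j < N"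
      then show "Yk k w i - Yk k w j > 0 \<and> Yk k w i + Yk k w j > 0" using elim(1)[rule_format, of "(i, j)"] by auto
    qed
    then show ?case using elim by simp
  qed
qed

lemma gk_lim: "((\<lambda>k. gk k w) \<longlongrightarrow> exp (- qf N S w / (2 * t))) at_top"
proof -
  define F where "F k = exp (- (\<Sum>i<N. (w i)\<^sup>2) / (2 * t) + psum N (\<lambda>i j.
      2 * k * (ln (1 + al w i j / sqrt (k * t)) - al w i j / sqrt (k * t)) +
      2 * k * (ln (1 + be w i j / sqrt (k * t)) - be w i j / sqrt (k * t))))" for k
  have "(F \<longlongrightarrow> exp (- (\<Sum>i<N. (w i)\<^sup>2) / (2 * t) + psum N (\<lambda>i j. - (al w i j)\<^sup>2 / t + - (be w i j)\<^sup>2 / t))) at_top"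
    unfolding F_def
    by (intro tendsto_exp tendsto_add tendsto_const tendsto_psum ln_lim t)
  moreover have "- (\<Sum>i<N. (w i)\<^sup>2) / (2 * t) + psum N (\<lambda>i j. - (al w i j)\<^sup>2 / t + - (be w i j)\<^sup>2 / t) = - qf N S w / (2 * t)"
  proof -
    have "psum N (\<lambda>i j. - (al w i j)\<^sup>2 / t + - (be w i j)\<^sup>2 / t)
        = psum N (\<lambda>i j. (- 1 / t) * ((w i - w j)\<^sup>2 / (r i - r j)\<^sup>2 + (w i + w j)\<^sup>2 / (r i + r j)\<^sup>2))"
      by (intro psum_cong) (simp add: al_def be_def power_divide algebra_simps)
    also have "\<dots> = (- 1 / t) * psum N (\<lambda>i j. (w i - w j)\<^sup>2 / (r i - r j)\<^sup>2 + (w i + w j)\<^sup>2 / (r i + r j)\<^sup>2)"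
      by (rule psum_cmult)
    finally have "psum N (\<lambda>i j. - (al w i j)\<^sup>2 / t + - (be w i j)\<^sup>2 / t)
        = - psum N (\<lambda>i j. (w i - w j)\<^sup>2 / (r i - r j)\<^sup>2 + (w i + w j)\<^sup>2 / (r i + r j)\<^sup>2) / t" by simp
    then show ?thesis unfolding quad_id using t by (simp add: field_simps)
  qed
  moreover have "eventually (\<lambda>k. F k = gk k w) at_top"
    using eventually_good[of w]
  proof eventually_elim
    case (elim k)
    then have k: "k > 0" and g: "good (Yk k w)" by auto
    show ?case unfolding gk_good[OF k g] F_def psi_def psum_cmult[symmetric] by (simp add: algebra_simps)
  qed
  ultimately show ?thesis using tendsto_cong by fastforce
qed

end

lemma comp_meas: "i \<in> I \<Longrightarrow> (\<lambda>x. x i) \<in> borel_measurable (PiM I (\<lambda>_. lborel :: real measure))"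
  using measurable_component_singleton[of i I "\<lambda>_. lborel :: real measure"]
  by (simp add: measurable_cong_sets[OF refl sets_lborel])
lemma pred_le_meas: "f \<in> borel_measurable M \<Longrightarrow> g \<in> borel_measurable M \<Longrightarrow> Measurable.pred M (\<lambda>x. (f x::real) \<le> g x)"
  unfolding pred_def by (rule borel_measurable_le)

lemma to_lborel: "f \<in> borel_measurable M \<Longrightarrow> f \<in> M \<rightarrow>\<^sub>M (lborel :: real measure)"
  by (simp add: measurable_cong_sets[OF refl sets_lborel])

lemma shift_meas: "(\<lambda>w. \<lambda>i\<in>I. w i + c i) \<in> PiM I (\<lambda>_. lborel) \<rightarrow>\<^sub>M PiM I (\<lambda>_. lborel :: real measure)"
  by (intro measurable_restrict to_lborel borel_measurable_add comp_meas borel_measurable_const)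

lemma shift_lborel: "emeasure lborel {x::real. x + c \<in> A} = emeasure lborel A" if "A \<in> sets borel"
proof -
  have "emeasure lborel A = emeasure (distr lborel borel ((+) c)) A" by (simp add: lborel_distr_plus)
  also have "\<dots> = emeasure lborel ((+) c -` A \<inter> space lborel)" using that by (simp add: emeasure_distr)
  also have "(+) c -` A \<inter> space lborel = {x. x + c \<in> A}" by (auto simp: add.commute)
  finally show ?thesis ..
qed

lemma shift_PiM:
  fixes c :: "nat \<Rightarrow> real" and I :: "nat set"
  assumes I: "finite I"
  shows "distr (PiM I (\<lambda>_. lborel)) (PiM I (\<lambda>_. lborel)) (\<lambda>w. \<lambda>i\<in>I. w i + c i) = PiM I (\<lambda>_. lborel)"
proof (rule product_sigma_finite.PiM_eqI[OF psf_lborel I])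
  show "sets (distr (PiM I (\<lambda>_. lborel)) (PiM I (\<lambda>_. lborel)) (\<lambda>w. \<lambda>i\<in>I. w i + c i)) = sets (PiM I (\<lambda>_. lborel))"
    by simp
  fix A :: "nat \<Rightarrow> real set" assume A: "\<And>i. i \<in> I \<Longrightarrow> A i \<in> sets lborel"
  have meas: "(\<lambda>w. \<lambda>i\<in>I. w i + c i) \<in> PiM I (\<lambda>_. lborel) \<rightarrow>\<^sub>M PiM I (\<lambda>_. lborel)"
    by (rule shift_meas)
  have pre: "(\<lambda>w. \<lambda>i\<in>I. w i + c i) -` PiE I A \<inter> space (PiM I (\<lambda>_. lborel)) = PiE I (\<lambda>i. {x. x + c i \<in> A i})"
    by (auto simp: space_PiM PiE_iff)
  have "emeasure (distr (PiM I (\<lambda>_. lborel)) (PiM I (\<lambda>_. lborel)) (\<lambda>w. \<lambda>i\<in>I. w i + c i)) (PiE I A)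
      = emeasure (PiM I (\<lambda>_. lborel)) (PiE I (\<lambda>i. {x. x + c i \<in> A i}))"
    using A by (subst emeasure_distr[OF meas]) (auto intro!: sets_PiM_I_finite I simp: pre)
  also have "\<dots> = (\<Prod>i\<in>I. emeasure lborel {x. x + c i \<in> A i})"
  proof (rule product_sigma_finite.emeasure_PiM[OF psf_lborel I])
    fix i assume "i \<in> I"
    have "(\<lambda>x. x + c i) \<in> borel \<rightarrow>\<^sub>M borel" by measurable
    then show "{x. x + c i \<in> A i} \<in> sets lborel"
      using measurable_sets[of "\<lambda>x. x + c i" borel borel "A i"] A[OF \<open>i \<in> I\<close>] by (simp add: vimage_def)
  qed
  also have "\<dots> = (\<Prod>i\<in>I. emeasure lborel (A i))"
    using A by (intro prod.cong refl shift_lborel) auto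
  finally show "emeasure (distr (PiM I (\<lambda>_. lborel)) (PiM I (\<lambda>_. lborel)) (\<lambda>w. \<lambda>i\<in>I. w i + c i)) (PiE I A) = (\<Prod>i\<in>I. emeasure lborel (A i))" .
qed

lemma chamberD_sets: assumes N: "N \<ge> 1" shows "chamberD N \<in> sets (RN N)"
proof -
  have p1: "Measurable.pred (RN N) (\<lambda>x. Suc i < N - 1 \<longrightarrow> x (Suc i) \<le> x i)" for i
  proof (cases "Suc i < N - 1")
    case True
    then have "Suc i \<in> {..<N}" "i \<in> {..<N}" by auto
    then have "Measurable.pred (RN N) (\<lambda>x. x (Suc i) \<le> x i)"
      unfolding RN_def by (intro pred_le_meas comp_meas)
    then show ?thesis using True by simp
  next
    case False then show ?thesis by simp
  qed
  have p2: "Measurable.pred (RN N) (\<lambda>x. 2 \<le> N \<longrightarrow> \<bar>x (N - 1)\<bar> \<le> x (N - 2))"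
  proof -
    have "N - 1 \<in> {..<N}" "N - 2 \<in> {..<N}" using N by auto
    then have "Measurable.pred (RN N) (\<lambda>x. \<bar>x (N - 1)\<bar> \<le> x (N - 2))"
      unfolding RN_def by (intro pred_le_meas comp_meas borel_measurable_abs)
    then show ?thesis by simp
  qed
  have "chamberD N = {x \<in> space (RN N). (\<forall>i. Suc i < N - 1 \<longrightarrow> x (Suc i) \<le> x i) \<and> (2 \<le> N \<longrightarrow> \<bar>x (N - 1)\<bar> \<le> x (N - 2))}"
    unfolding chamberD_def RN_def by (simp add: space_PiM)
  also have "\<dots> \<in> sets (RN N)"
  proof -
    have "Measurable.pred (RN N) (\<lambda>x. (\<forall>i. Suc i < N - 1 \<longrightarrow> x (Suc i) \<le> x i) \<and> (2 \<le> N \<longrightarrow> \<bar>x (N - 1)\<bar> \<le> x (N - 2)))"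
      by (intro pred_intros_logic(3) pred_intros_countable(1) p1 p2)
    then show ?thesis unfolding pred_def .
  qed
  finally show ?thesis .
qed

lemma dens_m3: fixes N :: nat and k :: real shows "(\<lambda>y. \<Prod>i<N. \<Prod>j\<in>{i<..<N}. ((y i)\<^sup>2 - (y j)\<^sup>2) powr (2 * k)) \<in> borel_measurable (RN N)"
  unfolding RN_def
proof (intro borel_measurable_prod)
  fix i j assume "i \<in> {..<N}" "j \<in> {i<..<N}"
  then have "i \<in> {..<N}" "j \<in> {..<N}" by auto
  then have [measurable]: "(\<lambda>x. x i) \<in> borel_measurable (PiM {..<N} (\<lambda>_. lborel :: real measure))"
     "(\<lambda>x. x j) \<in> borel_measurable (PiM {..<N} (\<lambda>_. lborel :: real measure))" by (auto intro: comp_meas)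
  show "(\<lambda>y. ((y i)\<^sup>2 - (y j)\<^sup>2) powr (2 * k)) \<in> borel_measurable (PiM {..<N} (\<lambda>_. lborel))"
    by measurable
qed

lemma dens_measurable: assumes N: "N \<ge> 1" shows "besselD_dens N k t \<in> borel_measurable (RN N)"
proof -
  have m1: "(\<lambda>y. indicator (chamberD N) y :: real) \<in> borel_measurable (RN N)"
    by (rule borel_measurable_indicator[OF chamberD_sets[OF N]])
  have m2: "(\<lambda>y. exp (- (\<Sum>i<N. (y i)\<^sup>2) / (2 * t))) \<in> borel_measurable (RN N)"
    unfolding RN_def by measurable
  show ?thesis unfolding besselD_dens_def
    by (intro borel_measurable_times m1 m2 dens_m3)
qed

context bsetup
begin

definition Tk :: "real \<Rightarrow> (nat \<Rightarrow> real) \<Rightarrow> nat \<Rightarrow> real" where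
  "Tk k y = (\<lambda>i\<in>{..<N}. y i - sqrt (k * t) * r i)"

lemma Tk_meas: "Tk k \<in> RN N \<rightarrow>\<^sub>M RN N"
  unfolding Tk_def RN_def
  by (intro measurable_restrict to_lborel borel_measurable_diff comp_meas borel_measurable_const) auto

lemma Yk_meas: "Yk k \<in> RN N \<rightarrow>\<^sub>M RN N"
  unfolding Yk_def RN_def by (rule shift_meas)

lemma Yk_distr: "distr (RN N) (RN N) (Yk k) = RN N"
  unfolding Yk_def RN_def by (rule shift_PiM) simp

lemma int_shift: fixes h :: "(nat \<Rightarrow> real) \<Rightarrow> real" shows "h \<in> borel_measurable (RN N) \<Longrightarrow> (\<integral>y. h y \<partial>RN N) = (\<integral>w. h (Yk k w) \<partial>RN N)"
proof -
  assume h: "h \<in> borel_measurable (RN N)"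
  have "(\<integral>y. h y \<partial>RN N) = (\<integral>y. h y \<partial>distr (RN N) (RN N) (Yk k))" by (simp add: Yk_distr)
  also have "\<dots> = (\<integral>w. h (Yk k w) \<partial>RN N)" by (rule integral_distr[OF Yk_meas[of k] h])
  finally show ?thesis .
qed

lemma TY: "w \<in> space (RN N) \<Longrightarrow> Tk k (Yk k w) = w"
  unfolding Tk_def Yk_def RN_def by (auto simp: space_PiM PiE_iff extensional_def)

lemma int_mu:
  assumes k: "k > 0" and f: "f \<in> borel_measurable (RN N)"
  shows "(\<integral>x. f x \<partial>distr (besselD_law N k t) (RN N) (Tk k))
       = (\<integral>w. gk k w * f w \<partial>RN N) / (\<integral>w. gk k w \<partial>RN N)"
proof -
  define dn where "dn = besselD_dens N k t"
  define Z where "Z = (\<integral>x. dn x \<partial>RN N)"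
  define D where "D = dn (cc k)"
  have D: "D > 0" unfolding D_def dn_def by (rule dens_cc_pos[OF k])
  have dm[measurable]: "dn \<in> borel_measurable (RN N)" unfolding dn_def by (rule dens_measurable[OF N])
  have dnn: "dn x \<ge> 0" for x unfolding dn_def besselD_dens_def
    by (intro mult_nonneg_nonneg prod_nonneg) auto
  have Znn: "Z \<ge> 0" unfolding Z_def by (intro integral_nonneg_AE) (simp add: dnn)
  have law: "besselD_law N k t = density (RN N) (\<lambda>y. ennreal (dn y / Z))"
    unfolding besselD_law_def dn_def Z_def ..
  have Tm: "Tk k \<in> besselD_law N k t \<rightarrow>\<^sub>M RN N"
    using Tk_meas unfolding law by (simp add: measurable_cong_sets[OF sets_density refl])
  have fT: "(\<lambda>y. f (Tk k y)) \<in> borel_measurable (RN N)"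
    using measurable_comp[OF Tk_meas f] by (simp add: comp_def)
  have "(\<integral>x. f x \<partial>distr (besselD_law N k t) (RN N) (Tk k)) = (\<integral>y. f (Tk k y) \<partial>besselD_law N k t)"
    by (rule integral_distr[OF Tm f])
  also have "\<dots> = (\<integral>y. (dn y / Z) * f (Tk k y) \<partial>RN N)"
    unfolding law using fT by (subst integral_density) (auto simp: dnn Znn)
  also have "\<dots> = (\<integral>y. dn y * f (Tk k y) \<partial>RN N) / Z"
  proof -
    have "(\<integral>y. (dn y / Z) * f (Tk k y) \<partial>RN N) = (\<integral>y. dn y * f (Tk k y) / Z \<partial>RN N)"
      by (rule Bochner_Integration.integral_cong[OF refl]) simp
    also have "\<dots> = (\<integral>y. dn y * f (Tk k y) \<partial>RN N) / Z" by (rule integral_divide_zero)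
    finally show ?thesis .
  qed
  also have "(\<integral>y. dn y * f (Tk k y) \<partial>RN N) = (\<integral>w. dn (Yk k w) * f (Tk k (Yk k w)) \<partial>RN N)"
    by (rule int_shift) (rule borel_measurable_times[OF dm fT])
  also have "\<dots> = (\<integral>w. D * (gk k w * f w) \<partial>RN N)"
    by (rule Bochner_Integration.integral_cong[OF refl]) (use D in \<open>simp add: TY gk_def dn_def D_def\<close>)
  also have "Z = (\<integral>w. dn (Yk k w) \<partial>RN N)" unfolding Z_def by (rule int_shift[OF dm])
  also have "\<dots> = (\<integral>w. D * gk k w \<partial>RN N)"
    by (rule Bochner_Integration.integral_cong[OF refl]) (use D in \<open>simp add: gk_def dn_def D_def\<close>)
  finally show ?thesis using D by simp
qed

end

context bsetup
begin

definition E :: "(nat \<Rightarrow> real) \<Rightarrow> real" where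
  "E w = exp (- qf N S w / (2 * t))"

definition At :: "nat \<Rightarrow> nat \<Rightarrow> real" where
  "At i j = S i j / t"

lemma qf_At: "qf N At w = qf N S w / t"
  unfolding qf_def At_def by (simp add: sum_divide_distrib)

lemma E_At: "E w = exp (- qf N At w / 2)"
  unfolding E_def qf_At by (simp add: field_simps)

lemma E_meas[measurable]: "E \<in> borel_measurable (RN N)"
  unfolding E_def RN_def using qf_measurable[of N S] by measurable

lemma E_pos: "E w > 0" unfolding E_def by simp

lemma E_int: "integrable (RN N) E"
proof -
  have pd: "qf N At w \<ge> (1 / t) * (\<Sum>i<N. (w i)\<^sup>2)" for w
    unfolding qf_At using qf_ge[of w] t by (simp add: divide_right_mono)
  have "integrable (PiM {..<N} (\<lambda>_. lborel)) (\<lambda>w. exp (- qf N At w / 2))"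
    by (rule int_gauss_qf[OF _ pd]) (use t in simp)
  then show ?thesis unfolding RN_def E_At .
qed

lemma gauss_At: "\<exists>C>0. \<forall>v. (\<integral>w. cis (\<Sum>i<N. mv N At v i * w i) * complex_of_real (E w) \<partial>RN N)
        = complex_of_real (C * exp (- qf N At v / 2))"
proof -
  have pd: "qf N At w \<ge> (1 / t) * (\<Sum>i<N. (w i)\<^sup>2)" for w
    unfolding qf_At using qf_ge[of w] t by (simp add: divide_right_mono)
  have sym: "At i j = At j i" if "i < N" "j < N" for i j unfolding At_def using S_sym that by simp
  show ?thesis unfolding E_At RN_def by (rule gauss_nd[OF sym _ pd]) (use t in simp_all)
qed

lemma gauss_C: obtains C where "C > 0" "(\<integral>w. E w \<partial>RN N) = C"
  "\<And>v. (\<integral>w. cis (\<Sum>i<N. mv N At v i * w i) * complex_of_real (E w) \<partial>RN N) = complex_of_real (C * exp (- qf N At v / 2))"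
proof -
  obtain C where C: "C > 0" and G: "\<And>v. (\<integral>w. cis (\<Sum>i<N. mv N At v i * w i) * complex_of_real (E w) \<partial>RN N)
        = complex_of_real (C * exp (- qf N At v / 2))" using gauss_At by blast
  have "complex_of_real (\<integral>w. E w \<partial>RN N) = complex_of_real C"
    using G[of "\<lambda>_. 0"] by (simp add: mv_def qf_def)
  then have "(\<integral>w. E w \<partial>RN N) = C" by simp
  then show ?thesis using that C G by blast
qed

lemma gk_meas: "gk k \<in> borel_measurable (RN N)"
proof -
  have "(\<lambda>w. besselD_dens N k t (Yk k w)) \<in> borel_measurable (RN N)"
    using measurable_comp[OF Yk_meas dens_measurable[OF N]] by (simp add: comp_def)
  then show ?thesis unfolding gk_def by (rule borel_measurable_divide) simp
qed

lemma dct: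
  assumes f: "f \<in> borel_measurable (RN N)" and B: "\<And>x. x \<in> space (RN N) \<Longrightarrow> \<bar>f x\<bar> \<le> B"
  shows "((\<lambda>k. \<integral>w. gk k w * f w \<partial>RN N) \<longlongrightarrow> (\<integral>w. E w * f w \<partial>RN N)) at_top"
proof (rule integral_dominated_convergence_at_top[where w = "\<lambda>w. \<bar>B\<bar> * exp (- (1 / t) * (\<Sum>i<N. (w i)\<^sup>2) / 2)"])
  show "(\<lambda>w. E w * f w) \<in> borel_measurable (RN N)" using f by measurable
  show "(\<lambda>w. gk k w * f w) \<in> borel_measurable (RN N)" for k
    using gk_meas f by (rule borel_measurable_times)
  show "integrable (RN N) (\<lambda>w. \<bar>B\<bar> * exp (- (1 / t) * (\<Sum>i<N. (w i)\<^sup>2) / 2))"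
    unfolding RN_def by (intro integrable_mult_right int_prod_gauss) (use t in simp)
  show "AE w in RN N. ((\<lambda>k. gk k w * f w) \<longlongrightarrow> E w * f w) at_top"
    unfolding E_def by (intro AE_I2 tendsto_mult_right gk_lim)
  show "\<forall>\<^sub>F k in at_top. AE w in RN N. norm (gk k w * f w) \<le> \<bar>B\<bar> * exp (- (1 / t) * (\<Sum>i<N. (w i)\<^sup>2) / 2)"
    using eventually_gt_at_top[of 0]
  proof eventually_elim
    case (elim k)
    show ?case
    proof (rule AE_I2)
      fix w assume w: "w \<in> space (RN N)"
      have g: "0 \<le> gk k w" "gk k w \<le> exp (- (\<Sum>i<N. (w i)\<^sup>2) / (2 * t))" using gk_bound[OF elim] by auto
      have e: "exp (- (\<Sum>i<N. (w i)\<^sup>2) / (2 * t)) = exp (- (1 / t) * (\<Sum>i<N. (w i)\<^sup>2) / 2)"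
        by (simp add: field_simps)
      have "norm (gk k w * f w) = gk k w * \<bar>f w\<bar>" using g by (simp add: abs_mult)
      also have "\<dots> \<le> exp (- (\<Sum>i<N. (w i)\<^sup>2) / (2 * t)) * \<bar>B\<bar>"
        using g B[OF w] by (intro mult_mono) auto
      finally show "norm (gk k w * f w) \<le> \<bar>B\<bar> * exp (- (1 / t) * (\<Sum>i<N. (w i)\<^sup>2) / 2)"
        unfolding e by (simp add: mult.commute)
    qed
  qed
qed

end

context bsetup
begin

definition Cn :: real where "Cn = (\<integral>w. E w \<partial>RN N)"

definition nu :: "(nat \<Rightarrow> real) measure" where
  "nu = density (RN N) (\<lambda>w. ennreal (E w / Cn))"

lemma Cn_pos: "Cn > 0"
  using gauss_C unfolding Cn_def by metis

lemma nu_int: fixes f :: "(nat \<Rightarrow> real) \<Rightarrow> real" shows "f \<in> borel_measurable (RN N) \<Longrightarrow> (\<integral>x. f x \<partial>nu) = (\<integral>w. E w * f w \<partial>RN N) / Cn"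
  unfolding nu_def
proof -
  assume f: "f \<in> borel_measurable (RN N)"
  have "integral\<^sup>L (density (RN N) (\<lambda>w. ennreal (E w / Cn))) f = (\<integral>w. (E w / Cn) * f w \<partial>RN N)"
    using f Cn_pos E_pos by (subst integral_density) (auto intro!: AE_I2 less_imp_le)
  also have "\<dots> = (\<integral>w. E w * f w / Cn \<partial>RN N)"
    by (rule Bochner_Integration.integral_cong[OF refl]) simp
  also have "\<dots> = (\<integral>w. E w * f w \<partial>RN N) / Cn" by (rule integral_divide_zero)
  finally show "integral\<^sup>L (density (RN N) (\<lambda>w. ennreal (E w / Cn))) f = (\<integral>w. E w * f w \<partial>RN N) / Cn" .
qed

lemma conv_lim:
  fixes f :: "(nat \<Rightarrow> real) \<Rightarrow> real"
  assumes f: "f \<in> borel_measurable (RN N)" and B: "\<And>x. x \<in> space (RN N) \<Longrightarrow> \<bar>f x\<bar> \<le> B"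
  shows "((\<lambda>k. \<integral>x. f x \<partial>distr (besselD_law N k t) (RN N) (Tk k)) \<longlongrightarrow> (\<integral>x. f x \<partial>nu)) at_top"
proof -
  have 1: "((\<lambda>k. \<integral>w. gk k w * f w \<partial>RN N) \<longlongrightarrow> (\<integral>w. E w * f w \<partial>RN N)) at_top"
    by (rule dct[OF f B])
  have 2: "((\<lambda>k. \<integral>w. gk k w * 1 \<partial>RN N) \<longlongrightarrow> (\<integral>w. E w * 1 \<partial>RN N)) at_top"
    by (rule dct[where B = 1]) auto
  have "((\<lambda>k. (\<integral>w. gk k w * f w \<partial>RN N) / (\<integral>w. gk k w \<partial>RN N)) \<longlongrightarrow> (\<integral>w. E w * f w \<partial>RN N) / Cn) at_top"
    using tendsto_divide[OF 1 2] Cn_pos unfolding Cn_def by simp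
  moreover have "eventually (\<lambda>k. (\<integral>w. gk k w * f w \<partial>RN N) / (\<integral>w. gk k w \<partial>RN N)
      = (\<integral>x. f x \<partial>distr (besselD_law N k t) (RN N) (Tk k))) at_top"
    using eventually_gt_at_top[of 0] by eventually_elim (simp add: int_mu[OF _ f])
  ultimately show ?thesis unfolding nu_int[OF f] using tendsto_cong by fastforce
qed

lemma nu_normal:
  assumes inv: "is_inverse_mat N S Sig"
  shows "is_centered_normal N (\<lambda>i j. t * Sig i j) nu"
  unfolding is_centered_normal_def
proof (intro conjI allI)
  have "emeasure nu (space nu) = ennreal (\<integral>w. E w / Cn \<partial>RN N)"
    unfolding nu_def using E_int Cn_pos E_pos
    by (simp add: emeasure_density nn_integral_eq_integral less_imp_le)
  also have "(\<integral>w. E w / Cn \<partial>RN N) = 1" using Cn_pos unfolding Cn_def by simp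
  finally show "prob_space nu" by (intro prob_spaceI) simp
  show "sets nu = sets (RN N)" unfolding nu_def by simp
  fix u :: "nat \<Rightarrow> real"
  obtain C where C: "C > 0" "(\<integral>w. E w \<partial>RN N) = C"
    and G: "\<And>v. (\<integral>w. cis (\<Sum>i<N. mv N At v i * w i) * complex_of_real (E w) \<partial>RN N) = complex_of_real (C * exp (- qf N At v / 2))"
    using gauss_C by blast
  have CC: "Cn = C" unfolding Cn_def using C by simp
  define v where "v i = t * (\<Sum>j<N. Sig i j * u j)" for i
  have mvv: "mv N At v i = u i" if "i < N" for i
  proof -
    have "mv N At v i = (\<Sum>j<N. S i j * (\<Sum>l<N. Sig j l * u l))"
      unfolding mv_def At_def v_def using t by (intro sum.cong refl) simp
    also have "\<dots> = (\<Sum>l<N. (\<Sum>j<N. S i j * Sig j l) * u l)"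
      by (simp add: sum_distrib_left sum_distrib_right mult_ac) (rule sum.swap)
    also have "\<dots> = (\<Sum>l<N. (if i = l then 1 else 0) * u l)"
      using inv that unfolding is_inverse_mat_def by (intro sum.cong refl) auto
    also have "\<dots> = (\<Sum>l<N. if l = i then u l else 0)" by (intro sum.cong refl) auto
    also have "\<dots> = u i" using that by simp
    finally show ?thesis .
  qed
  have phase: "(\<Sum>i<N. mv N At v i * w i) = (\<Sum>i<N. u i * w i)" for w
    by (intro sum.cong refl) (simp add: mvv)
  have qv: "qf N At v = (\<Sum>i<N. \<Sum>j<N. u i * (t * Sig i j) * u j)"
  proof -
    have "qf N At v = (\<Sum>i<N. v i * mv N At v i)"
      unfolding qf_def mv_def by (simp add: sum_distrib_left mult_ac)
    also have "\<dots> = (\<Sum>i<N. v i * u i)" by (intro sum.cong refl) (simp add: mvv)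
    also have "\<dots> = (\<Sum>i<N. \<Sum>j<N. u i * (t * Sig i j) * u j)"
      unfolding v_def by (simp add: sum_distrib_left sum_distrib_right mult_ac)
    finally show ?thesis .
  qed
  have cm: "(\<lambda>x. cis (\<Sum>i<N. u i * x i)) \<in> borel_measurable (RN N)"
    unfolding RN_def by measurable
  have "(\<integral>x. cis (\<Sum>i<N. u i * x i) \<partial>nu) = (\<integral>w. (E w / Cn) *\<^sub>R cis (\<Sum>i<N. u i * w i) \<partial>RN N)"
    unfolding nu_def using cm Cn_pos E_pos by (subst integral_density) (auto intro!: AE_I2 less_imp_le)
  also have "\<dots> = (\<integral>w. complex_of_real (1 / Cn) * (cis (\<Sum>i<N. mv N At v i * w i) * complex_of_real (E w)) \<partial>RN N)"
    by (rule Bochner_Integration.integral_cong[OF refl]) (simp add: phase scaleR_conv_of_real)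
  also have "\<dots> = complex_of_real (1 / Cn) * (\<integral>w. cis (\<Sum>i<N. mv N At v i * w i) * complex_of_real (E w) \<partial>RN N)"
    by (rule integral_mult_right_zero)
  also have "\<dots> = complex_of_real (exp (- (\<Sum>i<N. \<Sum>j<N. u i * (t * Sig i j) * u j) / 2))"
    unfolding G qv CC using C by simp
  finally show "(\<integral>x. cis (\<Sum>i<N. u i * x i) \<partial>nu) = complex_of_real (exp (- (\<Sum>i<N. \<Sum>j<N. u i * (t * Sig i j) * u j) / 2))" .
qed

end

lemma inverse_exists:
  fixes S :: "nat \<Rightarrow> nat \<Rightarrow> real"
  assumes pd: "\<And>w. qf N S w \<ge> (\<Sum>i<N. (w i)\<^sup>2)"
  shows "\<exists>\<Sigma>. is_inverse_mat N S \<Sigma>"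
proof -
  define A where "A = mat N N (\<lambda>(i, j). S i j)"
  have A: "A \<in> carrier_mat N N" unfolding A_def by simp
  have "Determinant.det A \<noteq> 0"
  proof
    assume "Determinant.det A = 0"
    then obtain v where v: "v \<in> carrier_vec N" "v \<noteq> 0\<^sub>v N" "A *\<^sub>v v = 0\<^sub>v N"
      using det_0_iff_vec_prod_zero[OF A] by auto
    define w where "w i = (if i < N then v $ i else 0)" for i
    have Av: "(\<Sum>j<N. S i j * w j) = 0" if "i < N" for i
    proof -
      have "(A *\<^sub>v v) $ i = 0" using v(3) that by simp
      moreover have "(A *\<^sub>v v) $ i = (\<Sum>j<N. S i j * w j)"
        using that v(1) unfolding A_def w_def
        by (simp add: mult_mat_vec_def scalar_prod_def row_def atLeast0LessThan)
      ultimately show ?thesis by simp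
    qed
    have "qf N S w = (\<Sum>i<N. w i * (\<Sum>j<N. S i j * w j))"
      unfolding qf_def by (simp add: sum_distrib_left mult_ac)
    also have "\<dots> = 0" using Av by simp
    finally have "(\<Sum>i<N. (w i)\<^sup>2) \<le> 0" using pd[of w] by simp
    then have "\<forall>i\<in>{..<N}. (w i)\<^sup>2 = 0"
    proof (subst sum_nonneg_eq_0_iff[symmetric])
      have "(\<Sum>i<N. (w i)\<^sup>2) \<ge> 0" by (intro sum_nonneg) auto
      with \<open>(\<Sum>i<N. (w i)\<^sup>2) \<le> 0\<close> show "(\<Sum>i<N. (w i)\<^sup>2) = 0" by linarith
    qed auto
    then have "v = 0\<^sub>v N" using v(1) unfolding w_def by (auto intro!: eq_vecI)
    with v(2) show False by simp
  qed
  from det_non_zero_imp_unit[OF A this, of undefined]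
  obtain B where B: "B \<in> carrier_mat N N" "B * A = 1\<^sub>m N" "A * B = 1\<^sub>m N"
    by (auto simp: Units_def ring_mat_def)
  define \<Sigma> where "\<Sigma> i j = B $$ (i, j)" for i j
  show ?thesis
  proof (intro exI[of _ \<Sigma>], unfold is_inverse_mat_def, intro allI impI conjI)
    fix i j assume ij: "i < N" "j < N"
    have "(A * B) $$ (i, j) = (\<Sum>l<N. S i l * \<Sigma> l j)"
      using ij A B(1) unfolding A_def \<Sigma>_def
      by (simp add: times_mat_def scalar_prod_def row_def col_def atLeast0LessThan)
    then show "(\<Sum>l<N. S i l * \<Sigma> l j) = (if i = j then 1 else 0)" using B(3) ij by simp
    have "(B * A) $$ (i, j) = (\<Sum>l<N. \<Sigma> i l * S l j)"
      using ij A B(1) unfolding A_def \<Sigma>_def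
      by (simp add: times_mat_def scalar_prod_def row_def col_def atLeast0LessThan)
    then show "(\<Sum>l<N. \<Sigma> i l * S l j) = (if i = j then 1 else 0)" using B(2) ij by simp
  qed
qed

theorem theorem5p2:
  fixes N :: nat and z r :: "nat \<Rightarrow> real" and S :: "nat \<Rightarrow> nat \<Rightarrow> real" and t :: real
  assumes N: "N \<ge> 1"
    and z_roots: "\<forall>i < N - 1. laguerre (N - 1) 1 (z i) = 0"
    and z_all: "\<forall>x. laguerre (N - 1) 1 x = 0 \<longrightarrow> (\<exists>i < N - 1. x = z i)"
    and z_dec: "\<forall>i. Suc i < N - 1 \<longrightarrow> z (Suc i) < z i"
    and z_pos: "N \<ge> 2 \<longrightarrow> z (N - 2) > 0"
    and r_def: "\<forall>i < N - 1. r i = sqrt (2 * z i)" "r (N - 1) = 0"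
    and S_diag: "\<forall>i < N. S i i = 1 + 2 * (\<Sum>l\<in>{..<N} - {i}. 1 / (r i - r l)\<^sup>2)
                                    + 2 * (\<Sum>l\<in>{..<N} - {i}. 1 / (r i + r l)\<^sup>2)"
    and S_off: "\<forall>i < N. \<forall>j < N. i \<noteq> j \<longrightarrow> S i j = 2 / (r i + r j)\<^sup>2 - 2 / (r i - r j)\<^sup>2"
    and t: "t > 0"
  shows "\<exists>\<Sigma>. is_inverse_mat N S \<Sigma> \<and>
           (\<exists>\<nu>. is_centered_normal N (\<lambda>i j. t * \<Sigma> i j) \<nu> \<and>
                conv_distr N
                  (\<lambda>k. distr (besselD_law N k t) (RN N)
                         (\<lambda>y. \<lambda>i\<in>{..<N}. y i - sqrt (k * t) * r i))
                  \<nu> at_top)"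
proof -
  interpret B: bsetup N z r S t
    by (rule bsetup.intro) (use N z_roots z_dec z_pos r_def S_diag S_off t in auto)
  obtain Sig where inv: "is_inverse_mat N S Sig"
    using inverse_exists[of N S] B.qf_ge by blast
  have conv: "conv_distr N (\<lambda>k. distr (besselD_law N k t) (RN N)
                         (\<lambda>y. \<lambda>i\<in>{..<N}. y i - sqrt (k * t) * r i)) B.nu at_top"
    unfolding conv_distr_def
  proof (intro allI impI)
    fix f :: "(nat \<Rightarrow> real) \<Rightarrow> real"
    assume f: "f \<in> borel_measurable (RN N)"
      and "continuous_on (PiE {..<N} (\<lambda>_. UNIV)) f"
      and "\<exists>B. \<forall>x\<in>PiE {..<N} (\<lambda>_. UNIV). \<bar>f x\<bar> \<le> B"
    then obtain Bd where Bd: "\<forall>x\<in>PiE {..<N} (\<lambda>_. UNIV). \<bar>f x\<bar> \<le> Bd" by blast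
    have sp: "space (RN N) = PiE {..<N} (\<lambda>_. UNIV)" unfolding RN_def by (simp add: space_PiM)
    have T: "(\<lambda>y. \<lambda>i\<in>{..<N}. y i - sqrt (k * t) * r i) = B.Tk k" for k
      by (rule ext) (simp add: B.Tk_def)
    show "((\<lambda>k. \<integral>x. f x \<partial>distr (besselD_law N k t) (RN N) (\<lambda>y. \<lambda>i\<in>{..<N}. y i - sqrt (k * t) * r i))
          \<longlongrightarrow> (\<integral>x. f x \<partial>B.nu)) at_top"
      unfolding T by (rule B.conv_lim[OF f]) (use Bd sp in auto)
  qed
  show ?thesis
    by (intro exI[of _ Sig] conjI inv exI[of _ B.nu] B.nu_normal conv)
qed

end
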